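(* (1) Let $\lambda\in(\mathbb Z^n_{\ge0})_+$, $\ell\in[n]$ with $\ell\ge\ell(\lambda)$, and $E\in B(\varpi_\ell)$ with $E\otimes T^0_\lambda$ semistandard. If $j\notin E$ and $j+1\in E$, then $\Psi_{E\otimes T^0_\lambda}=tT_j^{-1}\Psi_{s_jE\otimes T^0_\lambda}$. (2) If $E\in B(\varpi_\ell)$ and $s_jE\le E$, then $\Psi_E=tT_j^{-1}\Psi_{s_jE}$.
   Context: Fix $n\ge1$, $[n]=\{1,\dots,n\}$. $S_n$ with simple transpositions $s_i$ and length $\ell(\cdot)$ acts on $\mathbb Z^n$ by permuting coordinates; $\varpi_k=\varepsilon_1+\dots+\varepsilon_k$. $(\mathbb Z^n_{\ge0})_+=\{\lambda\in\mathbb Z^n_{\ge0}:\lambda_1\ge\dots\ge\lambda_n\}$, $\ell(\lambda)$ = number of nonzero parts; $S_{n,\lambda}$ the stabilizer. The affine Hecke algebra $H$ is the $\mathbb Z[t^{\pm1}]$-algebra with generators $T_1,\dots,T_{n-1},X_1^{\pm1},\dots,X_n^{\pm1}$ and relations $T_i^2=(t-1)T_i+t$, $T_iT_{i+1}T_i=T_{i+1}T_iT_{i+1}$, $T_iT_j=T_jT_i$ ($|i-j|>1$), $X_iX_j=X_jX_i$, $T_iX_iT_i=tX_{i+1}$, $T_iX_j=X_jT_i$ ($j\notin\{i,i+1\}$). $T_w$ via reduced words; $H_n=\mathrm{span}\{T_w\}$, $H_{n,\lambda}=\mathrm{span}\{T_w:w\in S_{n,\lambda}\}$, $\mathbf 1_\lambda=\sum_{w\in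 S_{n,\lambda}}T_w$. Columns: $B(\varpi_\ell)$ is the set of $C=(c_1<\dots<c_\ell)\subseteq[n]$; order $E\le F$ iff $e_i\le f_i$ for all $i$; $s_jC$ is the column whose underlying set is the image of $C$ under $(j,j+1)$; $u_C\in S_n$ sends $k\mapsto c_k$ ($k\le\ell$) and $\ell+1,\dots,n$ increasingly onto $[n]\setminus C$. Tensors $C_r\otimes\cdots\otimes C_1$ of columns of weakly decreasing lengths (left to right) are fillings of Young diagrams, semistandard if rows weakly increase. $T^0_\lambda$ is the tableau of shape $\lambda$ with row $i$ filled by $i$. $\Psi$: each $h\in H_n$ is uniquely $\sum_{F\in B(\varpi_\ell)}T_{u_F}h_F$, $h_F\in H_{n,\varpi_\ell}$. $\Psi_C=t^{\ell(u_C)}(T_{u_C^{-1}})^{-1}\mathbf 1_{\varpi_\ell}$ for $C\in B(\varpi_\ell)$; for $T=C\otimes S$ ($C\in B(\varpi_\ell)$, $S$ with columns of length $\le\ell$), write $\Psi_S=\sum_ET_{u_E}h_{E,S}$ ($h_{E,S}\in H_{n,\varpi_\ell}$) and set $\Psi_T=t^{\ell(u_C)}(T_{u_C^{-1}})^{-1}h_{C,S}$. *)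

theory Defs
  imports "HOL-Combinatorics.Combinatorics" "HOL-Library.Function_Algebras"
begin

text \<open>An element of H_n = span{T_w} is represented by its coefficient function
  (w |-> coefficient of T_w), vanishing outside S_n.  Coefficients lie in an
  arbitrary commutative ring containing the parameter t (a unit).\<close>

type_synonym 'a hecke = "(nat \<Rightarrow> nat) \<Rightarrow> 'a"

definition perms :: "nat \<Rightarrow> (nat \<Rightarrow> nat) set" where
  "perms n = {w. w permutes {1..n}}"

definition Hn :: "nat \<Rightarrow> ('a::zero) hecke set" where
  "Hn n = {h. \<forall>w. w \<notin> perms n \<longrightarrow> h w = 0}"

definition s :: "nat \<Rightarrow> nat \<Rightarrow> nat" where
  "s i = transpose i (Suc i)"

definition len :: "nat \<Rightarrow> (nat \<Rightarrow> nat) \<Rightarrow> nat" where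
  "len n w = card {(a, b). a \<in> {1..n} \<and> b \<in> {1..n} \<and> a < b \<and> w b < w a}"

definition Tb :: "nat \<Rightarrow> (nat \<Rightarrow> nat) \<Rightarrow> ('a::{zero,one}) hecke" where
  "Tb n w = (\<lambda>v. if v = w \<and> w \<in> perms n then 1 else 0)"

definition hsmult :: "'a::times \<Rightarrow> 'a hecke \<Rightarrow> 'a hecke" where
  "hsmult c h = (\<lambda>w. c * h w)"

text \<open>Left multiplication by T_i (1 <= i < n), from
  T_i T_v = T_{s_i v} if len(s_i v) > len v, and = (t-1) T_v + t T_{s_i v} otherwise.\<close>
definition Ti_mult :: "nat \<Rightarrow> 'a::comm_ring_1 \<Rightarrow> nat \<Rightarrow> 'a hecke \<Rightarrow> 'a hecke" where
  "Ti_mult n t i h = (\<lambda>w. if w \<in> perms n then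
      (if len n (s i \<circ> w) < len n w then h (s i \<circ> w) + (t - 1) * h w
       else t * h (s i \<circ> w))
     else 0)"

text \<open>Left multiplication by T_w, via T_w = T_i T_{s_i w} for a left descent i
  (we take the least one); the first argument is fuel (= len w).\<close>
fun Tact :: "nat \<Rightarrow> 'a::comm_ring_1 \<Rightarrow> nat \<Rightarrow> (nat \<Rightarrow> nat) \<Rightarrow> 'a hecke \<Rightarrow> 'a hecke" where
  "Tact n t 0 w g = g"
| "Tact n t (Suc k) w g =
     (if w = id then g else
        (let i = (LEAST i. 1 \<le> i \<and> i < n \<and> len n (s i \<circ> w) < len n w)
         in Ti_mult n t i (Tact n t k (s i \<circ> w) g)))"

definition Tw_mult :: "nat \<Rightarrow> 'a::comm_ring_1 \<Rightarrow> (nat \<Rightarrow> nat) \<Rightarrow> 'a hecke \<Rightarrow> 'a hecke" where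
  "Tw_mult n t w g = Tact n t (len n w) w g"

definition hmult :: "nat \<Rightarrow> 'a::comm_ring_1 \<Rightarrow> 'a hecke \<Rightarrow> 'a hecke \<Rightarrow> 'a hecke" where
  "hmult n t h g = (\<Sum>w\<in>perms n. hsmult (h w) (Tw_mult n t w g))"

definition hinv :: "nat \<Rightarrow> 'a::comm_ring_1 \<Rightarrow> 'a hecke \<Rightarrow> 'a hecke" where
  "hinv n t x = (THE y. y \<in> Hn n \<and> hmult n t x y = Tb n id \<and> hmult n t y x = Tb n id)"

definition stab :: "nat \<Rightarrow> nat \<Rightarrow> (nat \<Rightarrow> nat) set" where
  "stab n l = {w \<in> perms n. w ` {1..l} = {1..l}}"

definition Hsub :: "nat \<Rightarrow> nat \<Rightarrow> ('a::zero) hecke set" where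
  "Hsub n l = {h. \<forall>w. w \<notin> stab n l \<longrightarrow> h w = 0}"

definition one_lam :: "nat \<Rightarrow> nat \<Rightarrow> ('a::{zero,one}) hecke" where
  "one_lam n l = (\<lambda>w. if w \<in> stab n l then 1 else 0)"

definition cols :: "nat \<Rightarrow> nat \<Rightarrow> nat set set" where
  "cols n l = {C. C \<subseteq> {1..n} \<and> card C = l}"

definition u :: "nat \<Rightarrow> nat set \<Rightarrow> nat \<Rightarrow> nat" where
  "u n C k = (if 1 \<le> k \<and> k \<le> card C then sorted_list_of_set C ! (k - 1)
              else if card C < k \<and> k \<le> n then sorted_list_of_set ({1..n} - C) ! (k - card C - 1)
              else k)"

definition col_le :: "nat set \<Rightarrow> nat set \<Rightarrow> bool" where
  "col_le E F \<longleftrightarrow> card E = card F \<and>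
     (\<forall>i < card E. sorted_list_of_set E ! i \<le> sorted_list_of_set F ! i)"

definition scol :: "nat \<Rightarrow> nat set \<Rightarrow> nat set" where
  "scol j C = s j ` C"

text \<open>[C_r, ..., C_1] represents C_r (x) ... (x) C_1; semistandard: column lengths
  weakly decrease to the right and rows weakly increase.\<close>
definition semistandard :: "nat set list \<Rightarrow> bool" where
  "semistandard Ts \<longleftrightarrow> (\<forall>k. Suc k < length Ts \<longrightarrow>
     card (Ts ! Suc k) \<le> card (Ts ! k) \<and>
     (\<forall>r < card (Ts ! Suc k). sorted_list_of_set (Ts ! k) ! r \<le> sorted_list_of_set (Ts ! Suc k) ! r))"

definition is_partition :: "nat \<Rightarrow> nat list \<Rightarrow> bool" where
  "is_partition n lam \<longleftrightarrow> length lam = n \<and> sorted (rev lam)"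

definition nparts :: "nat list \<Rightarrow> nat" where
  "nparts lam = length (filter (\<lambda>x. x \<noteq> 0) lam)"

text \<open>T^0_lambda: row i filled with i; column k = {i in [n]. k <= lambda_i}\<close>
definition T0 :: "nat \<Rightarrow> nat list \<Rightarrow> nat set list" where
  "T0 n lam = map (\<lambda>k. {i \<in> {1..n}. k \<le> lam ! (i - 1)}) [1..<Suc (if lam = [] then 0 else hd lam)]"

definition decomp :: "nat \<Rightarrow> 'a::comm_ring_1 \<Rightarrow> nat \<Rightarrow> 'a hecke \<Rightarrow> nat set \<Rightarrow> 'a hecke" where
  "decomp n t l h = (THE hF. (\<forall>F. hF F \<in> Hsub n l) \<and> (\<forall>F. F \<notin> cols n l \<longrightarrow> hF F = 0) \<and>
        h = (\<Sum>F\<in>cols n l. hmult n t (Tb n (u n F)) (hF F)))"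

definition Psi_col :: "nat \<Rightarrow> 'a::comm_ring_1 \<Rightarrow> nat set \<Rightarrow> 'a hecke" where
  "Psi_col n t C = hsmult (t ^ len n (u n C))
      (hmult n t (hinv n t (Tb n (inv (u n C)))) (one_lam n (card C)))"

fun Psi :: "nat \<Rightarrow> 'a::comm_ring_1 \<Rightarrow> nat set list \<Rightarrow> 'a hecke" where
  "Psi n t [] = one_lam n 0"
| "Psi n t [C] = Psi_col n t C"
| "Psi n t (C # D # S) = hsmult (t ^ len n (u n C))
      (hmult n t (hinv n t (Tb n (inv (u n C)))) (decomp n t (card C) (Psi n t (D # S)) C))"

end

theory Submission
  imports Defs
begin


definition Inv :: "nat \<Rightarrow> (nat \<Rightarrow> nat) \<Rightarrow> (nat \<times> nat) set" where
  "Inv n w = {(a, b). a \<in> {1..n} \<and> b \<in> {1..n} \<and> a < b \<and> w b < w a}"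

lemma len_Inv: "len n w = card (Inv n w)" by (simp add: len_def Inv_def)

lemma finite_Inv: "finite (Inv n w)"
proof -
  have "Inv n w \<subseteq> {1..n} \<times> {1..n}" by (auto simp: Inv_def)
  then show ?thesis by (rule finite_subset) auto
qed

lemma s_apply: "s i x = (if x = i then Suc i else if x = Suc i then i else x)"
  by (simp add: s_def transpose_def)

lemma s_s[simp]: "s i (s i x) = x" by (simp add: s_apply)

lemma s_comp_s: "s i \<circ> s i = id" by (auto simp: fun_eq_iff)

lemma s_permutes: "1 \<le> i \<Longrightarrow> i < n \<Longrightarrow> s i permutes {1..n}"
  unfolding s_def by (rule permutes_swap_id) auto

lemma s_order: "\<not>(x = i \<and> y = Suc i) \<Longrightarrow> \<not>(x = Suc i \<and> y = i) \<Longrightarrow> (s i y < s i x \<longleftrightarrow> y < x)"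
  by (auto simp: s_apply)

lemma s_inj: "s i x = s i y \<longleftrightarrow> x = y"
  by (metis s_s)

lemma s_range: "1 \<le> i \<Longrightarrow> i < n \<Longrightarrow> x \<in> {1..n} \<Longrightarrow> s i x \<in> {1..n}"
  by (auto simp: s_apply)

lemma perm_inj: "w permutes S \<Longrightarrow> w a = w b \<longleftrightarrow> a = b"
  by (meson permutes_inj injD)

lemma perm_range: "w permutes {1..n} \<Longrightarrow> x \<in> {1..n} \<Longrightarrow> w x \<in> {1..n}"
  by (metis permutes_in_image)

lemma inv_range: "w permutes {1..n} \<Longrightarrow> x \<in> {1..n} \<Longrightarrow> inv w x \<in> {1..n}"
  by (metis permutes_in_image permutes_inv)

lemma Inv_sL:
  assumes w: "w permutes {1..n}" and i: "1 \<le> i" "i < n"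
    and pq: "inv w i < inv w (Suc i)"
  shows "Inv n (s i \<circ> w) = insert (inv w i, inv w (Suc i)) (Inv n w)"
    and "(inv w i, inv w (Suc i)) \<notin> Inv n w"
proof -
  define p where "p = inv w i"
  define q where "q = inv w (Suc i)"
  have wp: "w p = i" and wq: "w q = Suc i" using w unfolding p_def q_def
    by (simp_all add: permutes_inverses(1))
  have pr: "p \<in> {1..n}" "q \<in> {1..n}" unfolding p_def q_def
    using inv_range[OF w, of i] inv_range[OF w, of "Suc i"] i by auto
  have pq': "p < q" using pq by (simp add: p_def q_def)
  show "(inv w i, inv w (Suc i)) \<notin> Inv n w"
    using wp wq by (auto simp: Inv_def p_def[symmetric] q_def[symmetric])
  show "Inv n (s i \<circ> w) = insert (inv w i, inv w (Suc i)) (Inv n w)"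
  proof (rule set_eqI, clarify)
    fix a b
    show "((a, b) \<in> Inv n (s i \<circ> w)) = ((a, b) \<in> insert (inv w i, inv w (Suc i)) (Inv n w))"
    proof (cases "(a, b) = (p, q)")
      case True
      then show ?thesis using wp wq pr pq' by (auto simp: Inv_def p_def[symmetric] q_def[symmetric] s_apply)
    next
      case False
      have "\<not>(w a = i \<and> w b = Suc i)"
      proof
        assume "w a = i \<and> w b = Suc i"
        then have "w a = w p" "w b = w q" using wp wq by auto
        then have "a = p" "b = q" using perm_inj[OF w] by blast+
        with False show False by simp
      qed
      moreover have "a < b \<Longrightarrow> \<not>(w a = Suc i \<and> w b = i)"
      proof
        assume "a < b" "w a = Suc i \<and> w b = i"
        then have "w a = w q" "w b = w p" using wp wq by auto
        then have "a = q" "b = p" using perm_inj[OF w] by blast+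
        with \<open>a < b\<close> pq' show False by simp
      qed
      ultimately show ?thesis using False s_order[of "w a" i "w b"]
        by (auto simp: Inv_def p_def[symmetric] q_def[symmetric])
    qed
  qed
qed

lemma inv_s_comp:
  assumes w: "w permutes {1..n}" and i: "1 \<le> i" "i < n"
  shows "inv (s i \<circ> w) i = inv w (Suc i)" "inv (s i \<circ> w) (Suc i) = inv w i"
proof -
  have sw: "s i \<circ> w permutes {1..n}" by (rule permutes_compose[OF w s_permutes[OF i]])
  show "inv (s i \<circ> w) i = inv w (Suc i)"
    using sw w by (simp add: permutes_inv_eq permutes_inverses(1) s_apply)
  show "inv (s i \<circ> w) (Suc i) = inv w i"
    using sw w by (simp add: permutes_inv_eq permutes_inverses(1) s_apply)
qed

lemma lenL_up:
  assumes w: "w permutes {1..n}" and i: "1 \<le> i" "i < n"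
    and pq: "inv w i < inv w (Suc i)"
  shows "len n (s i \<circ> w) = Suc (len n w)"
  using Inv_sL[OF assms] by (simp add: len_Inv finite_Inv)

lemma lenL_down:
  assumes w: "w permutes {1..n}" and i: "1 \<le> i" "i < n"
    and pq: "inv w (Suc i) < inv w i"
  shows "len n w = Suc (len n (s i \<circ> w))"
proof -
  have sw: "s i \<circ> w permutes {1..n}" by (rule permutes_compose[OF w s_permutes[OF i]])
  have "len n (s i \<circ> (s i \<circ> w)) = Suc (len n (s i \<circ> w))"
    by (rule lenL_up[OF sw i]) (simp add: inv_s_comp[OF w i] pq)
  moreover have "s i \<circ> (s i \<circ> w) = w" by (auto simp: fun_eq_iff)
  ultimately show ?thesis by simp
qed

lemma Inv_sR:
  assumes k: "1 \<le> k" "k < n" and wk: "w k < w (Suc k)"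
  shows "Inv n (w \<circ> s k) = insert (k, Suc k) ((\<lambda>(a, b). (s k a, s k b)) ` Inv n w)"
    and "(k, Suc k) \<notin> (\<lambda>(a, b). (s k a, s k b)) ` Inv n w"
proof -
  let ?f = "\<lambda>(a::nat, b::nat). (s k a, s k b)"
  show "(k, Suc k) \<notin> ?f ` Inv n w"
  proof
    assume "(k, Suc k) \<in> ?f ` Inv n w"
    then obtain a b where ab: "(a, b) \<in> Inv n w" "s k a = k" "s k b = Suc k" by auto
    then have "a = Suc k" "b = k" by (metis s_s s_apply)+
    with ab show False by (auto simp: Inv_def)
  qed
  show "Inv n (w \<circ> s k) = insert (k, Suc k) (?f ` Inv n w)"
  proof (rule set_eqI, clarify)
    fix c d
    show "((c, d) \<in> Inv n (w \<circ> s k)) = ((c, d) \<in> insert (k, Suc k) (?f ` Inv n w))"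
    proof (cases "(c, d) = (k, Suc k) \<or> (c, d) = (Suc k, k)")
      case True
      then show ?thesis using k wk by (auto simp: Inv_def s_apply split: if_splits)
    next
      case False
      have ord: "s k c < s k d \<longleftrightarrow> c < d"
        using False s_order[of d k c] by (auto simp: s_apply)
      have rng: "c \<in> {1..n} \<longleftrightarrow> s k c \<in> {1..n}" "d \<in> {1..n} \<longleftrightarrow> s k d \<in> {1..n}"
        using k by (auto simp: s_apply)
      have "(c, d) \<in> ?f ` Inv n w \<longleftrightarrow> (s k c, s k d) \<in> Inv n w"
      proof
        assume "(c, d) \<in> ?f ` Inv n w"
        then obtain a b where "(a, b) \<in> Inv n w" "c = s k a" "d = s k b" by auto
        then show "(s k c, s k d) \<in> Inv n w" by simp
      next
        assume "(s k c, s k d) \<in> Inv n w"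
        then have "?f (s k c, s k d) \<in> ?f ` Inv n w" by (rule imageI)
        then show "(c, d) \<in> ?f ` Inv n w" by simp
      qed
      then show ?thesis using False ord rng by (auto simp: Inv_def)
    qed
  qed
qed

lemma lenR_up:
  assumes k: "1 \<le> k" "k < n" and wk: "w k < w (Suc k)"
  shows "len n (w \<circ> s k) = Suc (len n w)"
proof -
  let ?f = "\<lambda>(a::nat, b::nat). (s k a, s k b)"
  have "inj_on ?f (Inv n w)" by (auto simp: inj_on_def s_inj)
  then have "card (?f ` Inv n w) = card (Inv n w)" by (rule card_image)
  then show ?thesis using Inv_sR[OF assms] by (simp add: len_Inv finite_Inv)
qed

lemma lenR_down:
  assumes k: "1 \<le> k" "k < n" and wk: "w (Suc k) < w k"
  shows "len n w = Suc (len n (w \<circ> s k))"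
proof -
  have "len n ((w \<circ> s k) \<circ> s k) = Suc (len n (w \<circ> s k))"
    by (rule lenR_up[OF k]) (simp add: s_apply wk)
  moreover have "(w \<circ> s k) \<circ> s k = w" by (auto simp: fun_eq_iff)
  ultimately show ?thesis by simp
qed

lemma exists_inversion:
  fixes n :: nat
  assumes w: "w permutes {1..n}" and nid: "w \<noteq> id"
  shows "\<exists>a b. a \<in> {1..n} \<and> b \<in> {1..n} \<and> a < b \<and> w b < w a"
proof -
  obtain x0 :: nat where x0: "w x0 \<noteq> x0" using nid by (auto simp: fun_eq_iff)
  then have x0r: "x0 \<in> {1..n}" using w by (meson permutes_not_in)
  define x where "x = (LEAST x. x \<in> {1..n} \<and> w x \<noteq> x)"
  have xP: "x \<in> {1..n} \<and> w x \<noteq> x" unfolding x_def by (rule LeastI[of _ x0]) (use x0 x0r in auto)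
  have below: "\<And>y. 1 \<le> y \<Longrightarrow> y < x \<Longrightarrow> w y = y"
  proof -
    fix y assume "1 \<le> y" "y < x"
    then have "\<not> (y \<in> {1..n} \<and> w y \<noteq> y)" unfolding x_def using not_less_Least by blast
    then show "w y = y" using \<open>1 \<le> y\<close> \<open>y < x\<close> xP by auto
  qed
  have wxr: "w x \<in> {1..n}" using xP w perm_range by blast
  have gt: "x < w x"
  proof (rule ccontr)
    assume "\<not> x < w x"
    then have "w x < x" using xP by auto
    then have "w (w x) = w x" using below wxr by auto
    then have "w x = x" using perm_inj[OF w] by blast
    then show False using xP by simp
  qed
  define b where "b = inv w x"
  have wb: "w b = x" unfolding b_def using w by (simp add: permutes_inverses(1))
  have br: "b \<in> {1..n}" unfolding b_def using inv_range[OF w] xP by blast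
  have "b \<noteq> x" using wb xP by auto
  moreover have "\<not> b < x"
  proof
    assume "b < x"
    then have "w b = b" using below br by auto
    then show False using wb \<open>b < x\<close> by simp
  qed
  ultimately have "x < b" by simp
  then show ?thesis using xP br wb gt by (intro exI[of _ x] exI[of _ b]) auto
qed

lemma adj_desc:
  fixes w :: "nat \<Rightarrow> nat"
  shows "a < b \<Longrightarrow> w b < w a \<Longrightarrow> \<exists>k. a \<le> k \<and> k < b \<and> w (Suc k) < w k"
proof (induction "b - a" arbitrary: a)
  case 0
  then show ?case by simp
next
  case (Suc m)
  show ?case
  proof (cases "w (Suc a) < w a")
    case True
    then show ?thesis using Suc.prems by (intro exI[of _ a]) auto
  next
    case False
    then have "w b < w (Suc a)" using Suc.prems by simp
    then have "Suc a < b" using Suc.prems by (metis Suc_lessI less_irrefl)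
    have "m = b - Suc a" using Suc.hyps(2) by arith
    from Suc.hyps(1)[of "Suc a"] this \<open>Suc a < b\<close> \<open>w b < w (Suc a)\<close>
    obtain k where "Suc a \<le> k \<and> k < b \<and> w (Suc k) < w k" by auto
    then show ?thesis by (intro exI[of _ k]) auto
  qed
qed

lemma right_desc:
  assumes w: "w permutes {1..n}" and nid: "w \<noteq> id"
  shows "\<exists>k. 1 \<le> k \<and> k < n \<and> w (Suc k) < w k"
proof -
  obtain a b where ab: "a \<in> {1..n}" "b \<in> {1..n}" "a < b" "w b < w a"
    using exists_inversion[OF assms] by blast
  then obtain k where "a \<le> k \<and> k < b \<and> w (Suc k) < w k" using adj_desc by blast
  then show ?thesis using ab by (intro exI[of _ k]) auto
qed

lemma inv_neq_id: "w permutes S \<Longrightarrow> w \<noteq> id \<Longrightarrow> inv w \<noteq> id"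
  by (metis inv_id inv_inv_eq permutes_bij)

lemma left_desc:
  assumes w: "w permutes {1..n}" and nid: "w \<noteq> id"
  shows "\<exists>i. 1 \<le> i \<and> i < n \<and> inv w (Suc i) < inv w i"
  using right_desc[OF permutes_inv[OF w] inv_neq_id[OF w nid]] .

lemma len_id: "len n id = 0"
proof -
  have "Inv n id = {}" by (auto simp: Inv_def)
  then show ?thesis by (simp add: len_Inv)
qed

lemma len_zero_id:
  assumes w: "w permutes {1..n}" and l: "len n w = 0" shows "w = id"
proof (rule ccontr)
  assume "w \<noteq> id"
  then obtain a b where "a \<in> {1..n} \<and> b \<in> {1..n} \<and> a < b \<and> w b < w a"
    using exists_inversion[OF w] by blast
  then have "(a, b) \<in> Inv n w" by (simp add: Inv_def)
  then have "card (Inv n w) \<noteq> 0" using finite_Inv by (metis card_0_eq empty_iff)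
  then show False using l by (simp add: len_Inv)
qed

lemma lenL_iff:
  assumes w: "w permutes {1..n}" and i: "1 \<le> i" "i < n"
  shows "len n (s i \<circ> w) < len n w \<longleftrightarrow> inv w (Suc i) < inv w i"
proof -
  have "inv w (Suc i) \<noteq> inv w i" using w by (metis Suc_n_not_n permutes_inverses(1))
  then show ?thesis using lenL_up[OF w i] lenL_down[OF w i] by (cases "inv w i < inv w (Suc i)") auto
qed

lemma lenR_iff:
  assumes w: "w permutes {1..n}" and k: "1 \<le> k" "k < n"
  shows "len n (w \<circ> s k) < len n w \<longleftrightarrow> w (Suc k) < w k"
proof -
  have "w (Suc k) \<noteq> w k" using perm_inj[OF w] by simp
  then show ?thesis using lenR_up[OF k] lenR_down[OF k] by (cases "w k < w (Suc k)") auto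
qed


lemma perms_iff: "w \<in> perms n \<longleftrightarrow> w permutes {1..n}" by (simp add: perms_def)

definition Rop :: "nat \<Rightarrow> 'a::comm_ring_1 \<Rightarrow> nat \<Rightarrow> 'a hecke \<Rightarrow> 'a hecke" where
  "Rop n t k h = (\<lambda>w. if w \<in> perms n then
      (if len n (w \<circ> s k) < len n w then h (w \<circ> s k) + (t - 1) * h w
       else t * h (w \<circ> s k))
     else 0)"

lemma swap_commute:
  assumes w: "w permutes {1..n}" and "w k = i \<and> w (Suc k) = Suc i \<or> w k = Suc i \<and> w (Suc k) = i"
  shows "s i \<circ> w = w \<circ> s k"
proof
  fix z
  show "(s i \<circ> w) z = (w \<circ> s k) z"
  proof (cases "z = k \<or> z = Suc k")
    case True
    then show ?thesis using assms(2) by (auto simp: s_apply)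
  next
    case False
    then have "w z \<noteq> i" "w z \<noteq> Suc i" using assms(2) perm_inj[OF w] by metis+
    then show ?thesis using False by (simp add: s_apply)
  qed
qed

lemma commute_swap:
  assumes w: "w permutes {1..n}" and eq: "s i \<circ> w = w \<circ> s k"
  shows "w k = i \<and> w (Suc k) = Suc i \<or> w k = Suc i \<and> w (Suc k) = i"
proof -
  have e1: "s i (w k) = w (Suc k)" using fun_cong[OF eq, of k] by (simp add: s_apply)
  have "w (Suc k) \<noteq> w k" using perm_inj[OF w] by simp
  then show ?thesis using e1 by (auto simp: s_apply split: if_splits)
qed

lemma inv_comp_s:
  assumes w: "w permutes {1..n}" and k: "1 \<le> k" "k < n"
  shows "inv (w \<circ> s k) = s k \<circ> inv w"
proof -
  have "bij w" "bij (s k)" using w s_permutes[OF k] by (simp_all add: permutes_bij)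
  then have "inv (w \<circ> s k) = inv (s k) \<circ> inv w" by (simp add: o_inv_distrib)
  moreover have "inv (s k) = s k" using s_comp_s by (metis inv_unique_comp)
  ultimately show ?thesis by simp
qed

lemma Ti_Rop_commute:
  fixes t :: "'a::comm_ring_1"
  assumes i: "1 \<le> i" "i < n" and k: "1 \<le> k" "k < n"
  shows "Ti_mult n t i (Rop n t k h) = Rop n t k (Ti_mult n t i h)"
proof
  fix w
  show "Ti_mult n t i (Rop n t k h) w = Rop n t k (Ti_mult n t i h) w"
  proof (cases "w \<in> perms n")
    case False
    then show ?thesis by (simp add: Ti_mult_def Rop_def)
  next
    case True
    then have w: "w permutes {1..n}" by (simp add: perms_iff)
    define a where "a = s i \<circ> w"
    define b where "b = w \<circ> s k"
    define c where "c = s i \<circ> w \<circ> s k"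
    have a: "a permutes {1..n}" unfolding a_def by (rule permutes_compose[OF w s_permutes[OF i]])
    have b: "b permutes {1..n}" unfolding b_def by (rule permutes_compose[OF s_permutes[OF k] w])
    have ac: "a \<circ> s k = c" "s i \<circ> b = c" unfolding a_def b_def c_def by (simp_all add: o_assoc)
    have aw: "s i \<circ> a = w" unfolding a_def by (simp add: fun_eq_iff)
    have bw: "b \<circ> s k = w" unfolding b_def by (simp add: fun_eq_iff)
    have Lw: "len n (s i \<circ> w) < len n w \<longleftrightarrow> inv w (Suc i) < inv w i" by (rule lenL_iff[OF w i])
    have Lb: "len n (s i \<circ> b) < len n b \<longleftrightarrow> inv b (Suc i) < inv b i" by (rule lenL_iff[OF b i])
    have Rw: "len n (w \<circ> s k) < len n w \<longleftrightarrow> w (Suc k) < w k" by (rule lenR_iff[OF w k])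
    have Ra: "len n (a \<circ> s k) < len n a \<longleftrightarrow> a (Suc k) < a k" by (rule lenR_iff[OF a k])
    have inPa: "a \<in> perms n" "b \<in> perms n" using a b by (simp_all add: perms_iff)
    have LHS: "Ti_mult n t i (Rop n t k h) w =
       (if inv w (Suc i) < inv w i then
          ((if a (Suc k) < a k then h c + (t - 1) * h a else t * h c) +
           (t - 1) * (if w (Suc k) < w k then h b + (t - 1) * h w else t * h b))
        else t * (if a (Suc k) < a k then h c + (t - 1) * h a else t * h c))"
      using True inPa Lw Ra Rw ac unfolding Ti_mult_def Rop_def a_def[symmetric] b_def[symmetric] by simp
    have RHS: "Rop n t k (Ti_mult n t i h) w =
       (if w (Suc k) < w k then
          ((if inv b (Suc i) < inv b i then h c + (t - 1) * h b else t * h c) +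
           (t - 1) * (if inv w (Suc i) < inv w i then h a + (t - 1) * h w else t * h a))
        else t * (if inv b (Suc i) < inv b i then h c + (t - 1) * h b else t * h c))"
      using True inPa Lw Lb Rw ac unfolding Ti_mult_def Rop_def a_def[symmetric] b_def[symmetric] by simp
    have invb: "inv b = s k \<circ> inv w" unfolding b_def by (rule inv_comp_s[OF w k])
    show ?thesis
    proof (cases "a = b")
      case False
      then have nsw: "\<not> (w k = i \<and> w (Suc k) = Suc i \<or> w k = Suc i \<and> w (Suc k) = i)"
        using swap_commute[OF w] unfolding a_def b_def by blast
      have x1: "\<not> (inv w i = k \<and> inv w (Suc i) = Suc k)" "\<not> (inv w i = Suc k \<and> inv w (Suc i) = k)"
        using nsw w by (metis permutes_inverses(1))+
      have dLb: "inv b (Suc i) < inv b i \<longleftrightarrow> inv w (Suc i) < inv w i"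
        unfolding invb using s_order[of "inv w i" k "inv w (Suc i)"] x1 by simp
      have dRa: "a (Suc k) < a k \<longleftrightarrow> w (Suc k) < w k"
        unfolding a_def using s_order[of "w k" i "w (Suc k)"] nsw by auto
      show ?thesis unfolding LHS RHS dLb dRa by (simp add: algebra_simps)
    next
      case True
      then have sw: "w k = i \<and> w (Suc k) = Suc i \<or> w k = Suc i \<and> w (Suc k) = i"
        using commute_swap[OF w] unfolding a_def b_def by blast
      have cw: "c = w" using ac aw True by simp
      have iw1: "w k = i \<Longrightarrow> inv w i = k \<and> inv w (Suc i) = Suc k"
        using sw w by (metis permutes_inv_eq)
      have iw2: "w k = Suc i \<Longrightarrow> inv w i = Suc k \<and> inv w (Suc i) = k"
        using sw w by (metis permutes_inv_eq)
      have iw: "inv w i = k \<and> inv w (Suc i) = Suc k \<or> inv w i = Suc k \<and> inv w (Suc i) = k"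
        using sw iw1 iw2 by blast
      have dRa: "a (Suc k) < a k \<longleftrightarrow> \<not> (w (Suc k) < w k)"
        using True sw unfolding b_def by (auto simp: s_apply)
      have dLb: "inv b (Suc i) < inv b i \<longleftrightarrow> \<not> (inv w (Suc i) < inv w i)"
        using iw unfolding invb by (auto simp: s_apply)
      have same: "inv w (Suc i) < inv w i \<longleftrightarrow> w (Suc k) < w k"
        using sw iw1 iw2 by auto
      show ?thesis unfolding LHS RHS dLb dRa cw using True same by (simp add: algebra_simps)
    qed
  qed
qed


lemma sum_fun_apply: "(\<Sum>i\<in>A. f i) x = (\<Sum>i\<in>A. f i x)"
  by (induction A rule: infinite_finite_induct) auto

lemma finite_perms: "finite (perms n)"
  unfolding perms_def by (rule finite_permutations) simp

definition lin :: "('a::comm_ring_1 hecke \<Rightarrow> 'a hecke) \<Rightarrow> bool" where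
  "lin F \<longleftrightarrow> (\<forall>x y. F (x + y) = F x + F y) \<and> (\<forall>c x. F (hsmult c x) = hsmult c (F x))"

definition rcomm :: "nat \<Rightarrow> 'a::comm_ring_1 \<Rightarrow> ('a hecke \<Rightarrow> 'a hecke) \<Rightarrow> bool" where
  "rcomm n t F \<longleftrightarrow> (\<forall>k h. 1 \<le> k \<and> k < n \<longrightarrow> F (Rop n t k h) = Rop n t k (F h))"

lemma hsmult_0[simp]: "hsmult (0::'a::comm_ring_1) x = 0" by (simp add: hsmult_def fun_eq_iff)
lemma hsmult_1[simp]: "hsmult (1::'a::comm_ring_1) x = x" by (simp add: hsmult_def fun_eq_iff)
lemma hsmult_zero[simp]: "hsmult (c::'a::comm_ring_1) 0 = 0" by (simp add: hsmult_def fun_eq_iff)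
lemma hsmult_add: "hsmult (c::'a::comm_ring_1) (x + y) = hsmult c x + hsmult c y" by (simp add: hsmult_def fun_eq_iff algebra_simps)
lemma hsmult_add2: "hsmult ((c::'a::comm_ring_1) + d) x = hsmult c x + hsmult d x" by (simp add: hsmult_def fun_eq_iff algebra_simps)
lemma hsmult_hsmult: "hsmult (c::'a::comm_ring_1) (hsmult d x) = hsmult (c * d) x" by (simp add: hsmult_def fun_eq_iff algebra_simps)
lemma hsmult_sum: "hsmult (c::'a::comm_ring_1) (\<Sum>i\<in>A. f i) = (\<Sum>i\<in>A. hsmult c (f i))"
  by (simp add: hsmult_def fun_eq_iff sum_fun_apply sum_distrib_left)

lemma lin_zero: "lin F \<Longrightarrow> F 0 = 0"
  unfolding lin_def by (metis hsmult_0)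

lemma lin_add: "lin F \<Longrightarrow> F (x + y) = F x + F y" unfolding lin_def by blast
lemma lin_smult: "lin F \<Longrightarrow> F (hsmult c x) = hsmult c (F x)" unfolding lin_def by blast

lemma lin_sum: "lin F \<Longrightarrow> F (\<Sum>i\<in>A. f i) = (\<Sum>i\<in>A. F (f i))"
  by (induction A rule: infinite_finite_induct) (auto simp: lin_zero lin_add)

lemma lin_comp: "lin F \<Longrightarrow> lin G \<Longrightarrow> lin (F \<circ> G)"
  unfolding lin_def by auto

lemma rcomm_comp: "rcomm n t F \<Longrightarrow> rcomm n t G \<Longrightarrow> rcomm n t (F \<circ> G)"
  unfolding rcomm_def by auto

lemma lin_Ti: "lin (Ti_mult n t i)"
  unfolding lin_def Ti_mult_def hsmult_def by (auto simp: fun_eq_iff algebra_simps)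

lemma lin_Rop: "lin (Rop n t k)"
  unfolding lin_def Rop_def hsmult_def by (auto simp: fun_eq_iff algebra_simps)

lemma rcomm_Ti: "1 \<le> i \<Longrightarrow> i < n \<Longrightarrow> rcomm n t (Ti_mult n t i)"
  unfolding rcomm_def using Ti_Rop_commute by blast

lemma Rop_sum: "Rop n t k (\<Sum>i\<in>A. f i) = (\<Sum>i\<in>A. Rop n t k (f i))"
  by (rule lin_sum[OF lin_Rop])

lemma Rop_smult: "Rop n t k (hsmult c x) = hsmult c (Rop n t k x)"
  by (rule lin_smult[OF lin_Rop])

definition ldesc :: "nat \<Rightarrow> (nat \<Rightarrow> nat) \<Rightarrow> nat" where
  "ldesc n w = (LEAST i. 1 \<le> i \<and> i < n \<and> len n (s i \<circ> w) < len n w)"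

lemma ldesc_props:
  assumes w: "w permutes {1..n}" and nid: "w \<noteq> id"
  shows "1 \<le> ldesc n w" "ldesc n w < n" "len n (s (ldesc n w) \<circ> w) < len n w"
    "len n w = Suc (len n (s (ldesc n w) \<circ> w))"
proof -
  obtain i where i: "1 \<le> i" "i < n" "inv w (Suc i) < inv w i" using left_desc[OF w nid] by blast
  have dl: "len n (s i \<circ> w) < len n w" using lenL_iff[OF w] i by blast
  have P: "1 \<le> ldesc n w \<and> ldesc n w < n \<and> len n (s (ldesc n w) \<circ> w) < len n w"
    unfolding ldesc_def by (rule LeastI[where k=i]) (use i dl in auto)
  then show "1 \<le> ldesc n w" "ldesc n w < n" "len n (s (ldesc n w) \<circ> w) < len n w" by auto
  have "inv w (Suc (ldesc n w)) < inv w (ldesc n w)" using P lenL_iff[OF w] by blast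
  then show "len n w = Suc (len n (s (ldesc n w) \<circ> w))" using lenL_down[OF w] P by blast
qed

lemma Tw_mult_id: "Tw_mult n t id g = g"
  by (simp add: Tw_mult_def len_id)

lemma Tw_mult_step:
  assumes w: "w permutes {1..n}" and nid: "w \<noteq> id"
  shows "Tw_mult n t w g = Ti_mult n t (ldesc n w) (Tw_mult n t (s (ldesc n w) \<circ> w) g)"
proof -
  let ?i = "ldesc n w"
  have "Tw_mult n t w g = Tact n t (Suc (len n (s ?i \<circ> w))) w g"
    using ldesc_props(4)[OF w nid] by (simp only: Tw_mult_def)
  also have "\<dots> = Ti_mult n t ?i (Tact n t (len n (s ?i \<circ> w)) (s ?i \<circ> w) g)"
    unfolding Tact.simps(2) Let_def ldesc_def[symmetric] using nid by simp
  finally show ?thesis by (simp only: Tw_mult_def)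
qed

lemma Tw_lin_rcomm:
  assumes w: "w permutes {1..n}"
  shows "lin (Tw_mult n t w) \<and> rcomm n t (Tw_mult n t w)"
  using w
proof (induction "len n w" arbitrary: w rule: less_induct)
  case less
  note IH0 = less(1) and wp = less(2)
  show ?case
  proof (cases "w = id")
    case True
    then show ?thesis by (simp add: Tw_mult_id lin_def rcomm_def)
  next
    case False
    let ?i = "ldesc n w"
    have sw: "s ?i \<circ> w permutes {1..n}"
      using permutes_compose[OF wp s_permutes] ldesc_props[OF wp False] by blast
    have IH: "lin (Tw_mult n t (s ?i \<circ> w)) \<and> rcomm n t (Tw_mult n t (s ?i \<circ> w))"
      using IH0[OF _ sw] ldesc_props[OF wp False] by blast
    have eq: "Tw_mult n t w = Ti_mult n t ?i \<circ> Tw_mult n t (s ?i \<circ> w)"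
      by (intro ext) (simp only: o_apply Tw_mult_step[OF wp False])
    show ?thesis unfolding eq using IH lin_comp[OF lin_Ti] rcomm_comp[OF rcomm_Ti]
        ldesc_props[OF wp False] by blast
  qed
qed

lemma Tb_in_Hn: "Tb n w \<in> Hn n" by (simp add: Tb_def Hn_def)

lemma Ti_in_Hn: "Ti_mult n t i h \<in> Hn n" by (simp add: Ti_mult_def Hn_def)

lemma Tw_in_Hn: "w permutes {1..n} \<Longrightarrow> g \<in> Hn n \<Longrightarrow> Tw_mult n t w g \<in> Hn n"
  by (cases "w = id") (simp_all add: Tw_mult_id Tw_mult_step Ti_in_Hn)

lemma Ti_basis_up:
  assumes x: "x permutes {1..n}" and i: "1 \<le> i" "i < n" and up: "inv x i < inv x (Suc i)"
  shows "Ti_mult n t i (Tb n x) = Tb n (s i \<circ> x)"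
proof
  fix w
  have sx: "s i \<circ> x permutes {1..n}" by (rule permutes_compose[OF x s_permutes[OF i]])
  have l1: "len n (s i \<circ> x) = Suc (len n x)" by (rule lenL_up[OF x i up])
  have ne: "s i \<circ> x \<noteq> x" using l1 by auto
  have ss: "s i \<circ> (s i \<circ> x) = x" by (simp add: fun_eq_iff)
  show "Ti_mult n t i (Tb n x) w = Tb n (s i \<circ> x) w"
  proof (cases "w = s i \<circ> x")
    case True
    then show ?thesis using x sx l1 ss ne by (simp add: Ti_mult_def Tb_def perms_iff)
  next
    case False
    have "s i \<circ> w = x \<Longrightarrow> w = s i \<circ> x" by (metis comp_assoc s_comp_s id_comp)
    then show ?thesis using False x sx l1 ss
      by (auto simp: Ti_mult_def Tb_def perms_iff)
  qed
qed

lemma Tb_expand: "(h::'a::comm_ring_1 hecke) \<in> Hn n \<Longrightarrow> h = (\<Sum>w\<in>perms n. hsmult (h w) (Tb n w))"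
proof
  fix v assume h: "h \<in> Hn n"
  have "(\<Sum>w\<in>perms n. hsmult (h w) (Tb n w)) v = (\<Sum>w\<in>perms n. if w = v then h v else 0)"
    unfolding sum_fun_apply by (rule sum.cong) (auto simp: hsmult_def Tb_def)
  also have "\<dots> = h v" using h finite_perms by (auto simp: Hn_def)
  finally show "h v = (\<Sum>w\<in>perms n. hsmult (h w) (Tb n w)) v" by simp
qed

lemma Tw_Tb_id: "w permutes {1..n} \<Longrightarrow> Tw_mult n t w (Tb n id) = Tb n w"
proof (induction "len n w" arbitrary: w rule: less_induct)
  case less
  note IH0 = less(1) and wp = less(2)
  show ?case
  proof (cases "w = id")
    case True
    then show ?thesis by (simp add: Tw_mult_id)
  next
    case False
    let ?i = "ldesc n w"
    note P = ldesc_props[OF wp False]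
    have sw: "s ?i \<circ> w permutes {1..n}"
      using permutes_compose[OF wp s_permutes] P by blast
    have IH: "Tw_mult n t (s ?i \<circ> w) (Tb n id) = Tb n (s ?i \<circ> w)"
      using IH0[OF _ sw] P by simp
    have "inv (s ?i \<circ> w) ?i < inv (s ?i \<circ> w) (Suc ?i)"
      using inv_s_comp[OF wp P(1,2)] lenL_iff[OF wp P(1,2)] P(3) by simp
    then have "Ti_mult n t ?i (Tb n (s ?i \<circ> w)) = Tb n (s ?i \<circ> (s ?i \<circ> w))"
      by (rule Ti_basis_up[OF sw P(1,2)])
    note X = this
    moreover have "s ?i \<circ> (s ?i \<circ> w) = w" by (simp add: fun_eq_iff)
    ultimately show ?thesis using Tw_mult_step[OF wp False, of t] IH by simp
  qed
qed

lemma Rop_basis_up: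
  assumes x: "x permutes {1..n}" and k: "1 \<le> k" "k < n" and up: "x k < x (Suc k)"
  shows "Rop n t k (Tb n x) = Tb n (x \<circ> s k)"
proof
  fix w
  have sx: "x \<circ> s k permutes {1..n}" by (rule permutes_compose[OF s_permutes[OF k] x])
  have l1: "len n (x \<circ> s k) = Suc (len n x)" by (rule lenR_up[OF k up])
  have ne: "x \<circ> s k \<noteq> x" using l1 by auto
  have ss: "(x \<circ> s k) \<circ> s k = x" by (simp add: fun_eq_iff)
  show "Rop n t k (Tb n x) w = Tb n (x \<circ> s k) w"
  proof (cases "w = x \<circ> s k")
    case True
    then show ?thesis using x sx l1 ss ne by (simp add: Rop_def Tb_def perms_iff)
  next
    case False
    have "w \<circ> s k = x \<Longrightarrow> w = x \<circ> s k" by (metis comp_assoc s_comp_s comp_id)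
    then show ?thesis using False x sx l1 ss
      by (auto simp: Rop_def Tb_def perms_iff)
  qed
qed

lemma kill_lemma:
  assumes lF: "lin F" and lG: "lin G" and cF: "rcomm n t F" and cG: "rcomm n t G"
    and e: "F (Tb n id) = G (Tb n id)"
  shows "h \<in> Hn n \<Longrightarrow> F h = G h"
proof -
  have basis: "w permutes {1..n} \<Longrightarrow> F (Tb n w) = G (Tb n w)" for w
  proof (induction "len n w" arbitrary: w rule: less_induct)
    case less
    note IH0 = less(1) and wp = less(2)
    show ?case
    proof (cases "w = id")
      case True then show ?thesis using e by simp
    next
      case False
      obtain k where k: "1 \<le> k" "k < n" "w (Suc k) < w k" using right_desc[OF wp False] by blast
      define w' where "w' = w \<circ> s k"
      have w': "w' permutes {1..n}" unfolding w'_def by (rule permutes_compose[OF s_permutes[OF k(1,2)] wp])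
      have up: "w' k < w' (Suc k)" using k by (simp add: w'_def s_apply)
      have lw: "len n w' < len n w" unfolding w'_def using lenR_iff[OF wp k(1,2)] k(3) by simp
      have ww: "w' \<circ> s k = w" by (simp add: w'_def fun_eq_iff)
      have "Tb n w = Rop n t k (Tb n w')" using Rop_basis_up[OF w' k(1,2) up, of t] ww by simp
      then show ?thesis using cF cG k IH0[OF lw w'] unfolding rcomm_def by metis
    qed
  qed
  assume h: "h \<in> Hn n"
  have "F h = F (\<Sum>w\<in>perms n. hsmult (h w) (Tb n w))" using Tb_expand[OF h] by simp
  also have "\<dots> = (\<Sum>w\<in>perms n. hsmult (h w) (F (Tb n w)))" by (simp add: lin_sum[OF lF] lin_smult[OF lF])
  also have "\<dots> = (\<Sum>w\<in>perms n. hsmult (h w) (G (Tb n w)))" using basis by (simp add: perms_iff)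
  also have "\<dots> = G (\<Sum>w\<in>perms n. hsmult (h w) (Tb n w))" by (simp add: lin_sum[OF lG] lin_smult[OF lG])
  also have "\<dots> = G h" using Tb_expand[OF h] by simp
  finally show ?thesis .
qed


lemma hsmult_apply: "hsmult c a w = c * a w" by (simp add: hsmult_def)

lemma hmult_Tb: "w permutes {1..n} \<Longrightarrow> hmult n t (Tb n w) g = Tw_mult n t w g"
proof -
  assume w: "w permutes {1..n}"
  have "hmult n t (Tb n w) g = (\<Sum>v\<in>perms n. if v = w then Tw_mult n t w g else 0)"
    unfolding hmult_def by (rule sum.cong) (auto simp: Tb_def)
  also have "\<dots> = Tw_mult n t w g" using w finite_perms by (simp add: perms_iff)
  finally show ?thesis .
qed

lemma lin_hmult: "lin (hmult n t a)"
proof -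
  have L: "v \<in> perms n \<Longrightarrow> lin (Tw_mult n t v)" for v using Tw_lin_rcomm by (auto simp: perms_iff)
  show ?thesis unfolding lin_def
  proof (intro conjI allI)
    fix x y
    show "hmult n t a (x + y) = hmult n t a x + hmult n t a y"
    proof -
      have "hmult n t a (x + y) = (\<Sum>w\<in>perms n. hsmult (a w) (Tw_mult n t w x) + hsmult (a w) (Tw_mult n t w y))"
        unfolding hmult_def by (rule sum.cong) (simp_all only: lin_add[OF L] hsmult_add)
      then show ?thesis by (simp only: sum.distrib hmult_def)
    qed
  next
    fix c x
    show "hmult n t a (hsmult c x) = hsmult c (hmult n t a x)"
      unfolding hmult_def using L by (simp add: lin_smult hsmult_sum hsmult_hsmult mult.commute)
  qed
qed

lemma rcomm_hmult: "rcomm n t (hmult n t a)"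
proof -
  have R: "v \<in> perms n \<Longrightarrow> rcomm n t (Tw_mult n t v)" for v using Tw_lin_rcomm by (auto simp: perms_iff)
  show ?thesis unfolding rcomm_def
  proof (intro allI impI)
    fix k h assume k: "1 \<le> k \<and> k < n"
    have "hmult n t a (Rop n t k h) = (\<Sum>v\<in>perms n. hsmult (a v) (Rop n t k (Tw_mult n t v h)))"
      unfolding hmult_def using R k by (simp add: rcomm_def)
    also have "\<dots> = Rop n t k (hmult n t a h)"
      unfolding hmult_def by (simp add: Rop_sum Rop_smult)
    finally show "hmult n t a (Rop n t k h) = Rop n t k (hmult n t a h)" .
  qed
qed

lemma hmult_Tb_id: "(a::'a::comm_ring_1 hecke) \<in> Hn n \<Longrightarrow> hmult n t a (Tb n id) = a"
proof -
  assume a: "a \<in> Hn n"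
  have "hmult n t a (Tb n id) = (\<Sum>w\<in>perms n. hsmult (a w) (Tb n w))"
    unfolding hmult_def by (rule sum.cong) (auto simp: Tw_Tb_id perms_iff)
  then show ?thesis using Tb_expand[OF a] by simp
qed

lemma Hn_add: "(x::'a::comm_ring_1 hecke) \<in> Hn n \<Longrightarrow> y \<in> Hn n \<Longrightarrow> x + y \<in> Hn n" by (simp add: Hn_def)
lemma Hn_smult: "x \<in> Hn n \<Longrightarrow> hsmult (c::'a::comm_ring_1) x \<in> Hn n" by (simp add: Hn_def hsmult_def)
lemma Hn_sum: "(\<And>i. i \<in> A \<Longrightarrow> f i \<in> Hn n) \<Longrightarrow> (\<Sum>i\<in>A. f i) \<in> Hn n"
  by (simp add: Hn_def sum_fun_apply)

lemma hmult_in_Hn: "g \<in> Hn n \<Longrightarrow> hmult n t a g \<in> Hn n"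
  unfolding hmult_def by (intro Hn_sum Hn_smult Tw_in_Hn) (auto simp: perms_iff)

lemma hmult_add1: "hmult n t (a + b) g = hmult n t a g + hmult n t b g"
  unfolding hmult_def by (simp add: hsmult_add2 sum.distrib)

lemma hmult_smult1: "hmult n t (hsmult c a) g = hsmult c (hmult n t a g)"
  unfolding hmult_def hsmult_sum by (simp add: hsmult_apply hsmult_hsmult)

lemma hmult_add2: "hmult n t a (x + y) = hmult n t a x + hmult n t a y"
  by (rule lin_add[OF lin_hmult])

lemma hmult_smult2: "hmult n t a (hsmult c x) = hsmult c (hmult n t a x)"
  by (rule lin_smult[OF lin_hmult])

lemma hmult_id_left: "hmult n t (Tb n id) g = g"
  by (simp add: hmult_Tb Tw_mult_id)

lemma hmult_assoc:
  assumes b: "b \<in> Hn n" and g: "g \<in> Hn n"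
  shows "hmult n t (hmult n t a b) g = hmult n t a (hmult n t b g)"
proof -
  have "hmult n t (hmult n t a b) g = (hmult n t a \<circ> hmult n t b) g"
  proof (rule kill_lemma[OF lin_hmult lin_comp[OF lin_hmult lin_hmult] rcomm_hmult
        rcomm_comp[OF rcomm_hmult rcomm_hmult] _ g])
    show "hmult n t (hmult n t a b) (Tb n id) = (hmult n t a \<circ> hmult n t b) (Tb n id)"
      using b by (simp add: hmult_Tb_id hmult_in_Hn)
  qed
  then show ?thesis by simp
qed

definition isinv :: "nat \<Rightarrow> 'a::comm_ring_1 \<Rightarrow> 'a hecke \<Rightarrow> 'a hecke \<Rightarrow> bool" where
  "isinv n t x y \<longleftrightarrow> x \<in> Hn n \<and> y \<in> Hn n \<and> hmult n t x y = Tb n id \<and> hmult n t y x = Tb n id"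

lemma hinv_eq:
  assumes "isinv n t x y" shows "hinv n t x = y"
  unfolding hinv_def
proof (rule the_equality)
  show "y \<in> Hn n \<and> hmult n t x y = Tb n id \<and> hmult n t y x = Tb n id" using assms by (simp add: isinv_def)
next
  fix y' assume y': "y' \<in> Hn n \<and> hmult n t x y' = Tb n id \<and> hmult n t y' x = Tb n id"
  have x: "x \<in> Hn n" and y: "y \<in> Hn n" and yx: "hmult n t y x = Tb n id" using assms by (auto simp: isinv_def)
  have "y' = hmult n t (hmult n t y x) y'" using yx by (simp add: hmult_id_left)
  also have "\<dots> = hmult n t y (hmult n t x y')" using x y' by (simp add: hmult_assoc)
  also have "\<dots> = y" using y' y by (simp add: hmult_Tb_id)
  finally show "y' = y" .
qed

lemma isinv_mult:
  assumes "isinv n t x y" "isinv n t x' y'"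
  shows "isinv n t (hmult n t x x') (hmult n t y' y)"
proof -
  have h: "x \<in> Hn n" "y \<in> Hn n" "x' \<in> Hn n" "y' \<in> Hn n" "hmult n t x y = Tb n id"
     "hmult n t y x = Tb n id" "hmult n t x' y' = Tb n id" "hmult n t y' x' = Tb n id"
    using assms by (auto simp: isinv_def)
  have "hmult n t (hmult n t x x') (hmult n t y' y) = hmult n t x (hmult n t x' (hmult n t y' y))"
    using h by (simp add: hmult_assoc hmult_in_Hn)
  also have "\<dots> = hmult n t x (hmult n t (hmult n t x' y') y)" using h hmult_assoc[of y' n y t x'] by simp
  also have "\<dots> = Tb n id" using h by (simp add: hmult_id_left)
  finally have 1: "hmult n t (hmult n t x x') (hmult n t y' y) = Tb n id" .
  have "hmult n t (hmult n t y' y) (hmult n t x x') = hmult n t y' (hmult n t y (hmult n t x x'))"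
    using h by (simp add: hmult_assoc hmult_in_Hn)
  also have "\<dots> = hmult n t y' (hmult n t (hmult n t y x) x')" using h hmult_assoc[of x n x' t y] by simp
  also have "\<dots> = Tb n id" using h by (simp add: hmult_id_left)
  finally have 2: "hmult n t (hmult n t y' y) (hmult n t x x') = Tb n id" .
  show ?thesis using 1 2 h by (simp add: isinv_def hmult_in_Hn)
qed

lemma isinv_id: "isinv n t (Tb n id) (Tb n id)"
  by (simp add: isinv_def Tb_in_Hn hmult_id_left)

lemma hinv_id: "hinv n t (Tb n id) = Tb n id"
  by (rule hinv_eq[OF isinv_id])

lemma Ti_basis_down:
  assumes x: "x permutes {1..n}" and i: "1 \<le> i" "i < n" and dn: "inv x (Suc i) < inv x i"
  shows "Ti_mult n t i (Tb n x) = hsmult (t - 1) (Tb n x) + hsmult t (Tb n (s i \<circ> x))"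
proof
  fix w
  have sx: "s i \<circ> x permutes {1..n}" by (rule permutes_compose[OF x s_permutes[OF i]])
  have l1: "len n x = Suc (len n (s i \<circ> x))" by (rule lenL_down[OF x i dn])
  have ne: "s i \<circ> x \<noteq> x" using l1 by auto
  have ss: "s i \<circ> (s i \<circ> x) = x" by (simp add: fun_eq_iff)
  have bk: "s i \<circ> w = x \<Longrightarrow> w = s i \<circ> x" by (metis comp_assoc s_comp_s id_comp)
  show "Ti_mult n t i (Tb n x) w = (hsmult (t - 1) (Tb n x) + hsmult t (Tb n (s i \<circ> x))) w"
  proof (cases "w = x")
    case True
    then show ?thesis using x sx l1 ss ne by (simp add: Ti_mult_def Tb_def perms_iff hsmult_def)
  next
    case False
    show ?thesis
    proof (cases "w = s i \<circ> x")
      case True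
      then show ?thesis using x sx l1 ss ne by (simp add: Ti_mult_def Tb_def perms_iff hsmult_def)
    next
      case False
      then show ?thesis using \<open>w \<noteq> x\<close> bk x sx
        by (auto simp: Ti_mult_def Tb_def perms_iff hsmult_def)
    qed
  qed
qed

lemma len_s: "1 \<le> i \<Longrightarrow> i < n \<Longrightarrow> len n (s i) = 1"
  using lenR_up[of i n id] by (simp add: len_id)

lemma Tw_mult_s:
  assumes i: "1 \<le> i" "i < n"
  shows "Tw_mult n t (s i) g = Ti_mult n t i g"
proof -
  have sp: "s i permutes {1..n}" by (rule s_permutes[OF i])
  have nid: "s i \<noteq> id" by (metis Suc_n_not_n id_apply s_apply)
  let ?d = "ldesc n (s i)"
  note P = ldesc_props[OF sp nid]
  have "len n (s ?d \<circ> s i) = 0" using P(4) len_s[OF i] by simp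
  then have "s ?d \<circ> s i = id" using len_zero_id permutes_compose[OF sp s_permutes[OF P(1,2)]] by blast
  then have sd: "s ?d = s i"
  proof -
    assume a: "s ?d \<circ> s i = id"
    have "s ?d = (s ?d \<circ> s i) \<circ> s i" by (simp add: fun_eq_iff)
    then show ?thesis using a by simp
  qed
  have "s i ?d = Suc ?d" using fun_cong[OF sd, of ?d] by (simp add: s_apply)
  then have "?d = i" by (simp add: s_apply split: if_splits)
  then show ?thesis using Tw_mult_step[OF sp nid, of t g] \<open>s ?d \<circ> s i = id\<close>
    by (simp add: Tw_mult_id)
qed

lemma hmult_Ts: "1 \<le> i \<Longrightarrow> i < n \<Longrightarrow> hmult n t (Tb n (s i)) g = Ti_mult n t i g"
  by (simp add: hmult_Tb[OF s_permutes] Tw_mult_s)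

lemma Ti_Tb_id: "1 \<le> i \<Longrightarrow> i < n \<Longrightarrow> Ti_mult n t i (Tb n id) = Tb n (s i)"
  using Ti_basis_up[of id n i t] by (simp add: permutes_id)

lemma Ti_Ts: "1 \<le> i \<Longrightarrow> i < n \<Longrightarrow>
   Ti_mult n t i (Tb n (s i)) = hsmult (t - 1) (Tb n (s i)) + hsmult t (Tb n id)"
proof -
  assume i: "1 \<le> i" "i < n"
  have iv: "inv (s i) = s i" using s_comp_s by (metis inv_unique_comp)
  have "inv (s i) (Suc i) < inv (s i) i" unfolding iv by (simp add: s_apply)
  from Ti_basis_down[OF s_permutes[OF i] i this, of t] show ?thesis by (simp add: s_comp_s)
qed

lemma isinv_Ts:
  fixes t ti :: "'a::comm_ring_1"
  assumes i: "1 \<le> i" "i < n" and tt: "t * ti = 1"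
  shows "isinv n t (Tb n (s i)) (hsmult ti (Tb n (s i) + hsmult (1 - t) (Tb n id)))"
proof -
  let ?y = "hsmult ti (Tb n (s i) + hsmult (1 - t) (Tb n id))"
  have yH: "?y \<in> Hn n" by (intro Hn_smult Hn_add Tb_in_Hn)
  have key: "hsmult ti ((hsmult (t - 1) (Tb n (s i)) + hsmult t (Tb n id)) + hsmult (1 - t) (Tb n (s i))) = Tb n id"
  proof (rule ext)
    fix w
    have ra: "ti * (((t - 1) * a + t * b) + (1 - t) * a) = b" for a b :: 'a
    proof -
      have "ti * (((t - 1) * a + t * b) + (1 - t) * a) = (t * ti) * b" by (simp add: algebra_simps)
      then show ?thesis using tt by simp
    qed
    show "hsmult ti ((hsmult (t - 1) (Tb n (s i)) + hsmult t (Tb n id)) + hsmult (1 - t) (Tb n (s i))) w = Tb n id w"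
      by (simp only: hsmult_apply plus_fun_def ra)
  qed
  have e1: "hmult n t (Tb n (s i)) ?y = Tb n id"
    using key i by (simp only: hmult_Ts lin_smult[OF lin_Ti] lin_add[OF lin_Ti] Ti_Ts Ti_Tb_id)
  have e2: "hmult n t ?y (Tb n (s i)) = Tb n id"
    using key i by (simp only: hmult_smult1 hmult_add1 hmult_Ts hmult_id_left Ti_Ts)
  show ?thesis using e1 e2 yH by (simp add: isinv_def Tb_in_Hn)
qed

lemma isinv_Tb:
  fixes t :: "'a::comm_ring_1"
  assumes x: "x permutes {1..n}" and tu: "t dvd 1"
  shows "\<exists>y. isinv n t (Tb n x) y"
  using x
proof (induction "len n x" arbitrary: x rule: less_induct)
  case less
  show ?case
  proof (cases "x = id")
    case True then show ?thesis using isinv_id by blast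
  next
    case False
    let ?i = "ldesc n x"
    note P = ldesc_props[OF less(2) False]
    have sx: "s ?i \<circ> x permutes {1..n}" using permutes_compose[OF less(2) s_permutes[OF P(1,2)]] .
    obtain y' where y': "isinv n t (Tb n (s ?i \<circ> x)) y'" using less(1)[OF _ sx] P by auto
    obtain ti where tt: "t * ti = 1" using tu by (metis dvdE)
    obtain yi where yi: "isinv n t (Tb n (s ?i)) yi" using isinv_Ts[OF P(1,2) tt] by blast
    have "inv (s ?i \<circ> x) ?i < inv (s ?i \<circ> x) (Suc ?i)"
      using inv_s_comp[OF less(2) P(1,2)] lenL_iff[OF less(2) P(1,2)] P(3) by simp
    then have "Ti_mult n t ?i (Tb n (s ?i \<circ> x)) = Tb n (s ?i \<circ> (s ?i \<circ> x))"
      by (rule Ti_basis_up[OF sx P(1,2)])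
    moreover have "s ?i \<circ> (s ?i \<circ> x) = x" by (simp add: fun_eq_iff)
    ultimately have "hmult n t (Tb n (s ?i)) (Tb n (s ?i \<circ> x)) = Tb n x"
      using P by (simp add: hmult_Ts)
    then show ?thesis using isinv_mult[OF yi y'] by metis
  qed
qed

lemma isinv_hinv: "x permutes {1..n} \<Longrightarrow> (t::'a::comm_ring_1) dvd 1 \<Longrightarrow> isinv n t (Tb n x) (hinv n t (Tb n x))"
  using isinv_Tb hinv_eq by metis


lemma sl_props:
  assumes "finite A"
  shows "sorted_wrt (<) (sorted_list_of_set A)" "set (sorted_list_of_set A) = A"
    "length (sorted_list_of_set A) = card A"
  using sorted_list_of_set_unique[OF assms, of "sorted_list_of_set A"] by auto

lemma cols_D:
  assumes "F \<in> cols n l"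
  shows "F \<subseteq> {1..n}" "card F = l" "finite F" "l \<le> n"
    "finite ({1..n} - F)" "card ({1..n} - F) = n - l"
proof -
  show F: "F \<subseteq> {1..n}" "card F = l" using assms by (auto simp: cols_def)
  show fin: "finite F" using F(1) finite_subset by blast
  show "l \<le> n" using card_mono[OF _ F(1)] F(2) by simp
  show "finite ({1..n} - F)" by simp
  show "card ({1..n} - F) = n - l" using F by (simp add: card_Diff_subset fin)
qed

lemma u_low: "F \<in> cols n l \<Longrightarrow> 1 \<le> a \<Longrightarrow> a \<le> l \<Longrightarrow> u n F a = sorted_list_of_set F ! (a - 1)"
  using cols_D by (simp add: u_def)

lemma u_high: "F \<in> cols n l \<Longrightarrow> l < a \<Longrightarrow> a \<le> n \<Longrightarrow> u n F a = sorted_list_of_set ({1..n} - F) ! (a - l - 1)"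
  using cols_D(2) by (simp add: u_def)

lemma u_out: "F \<in> cols n l \<Longrightarrow> a \<notin> {1..n} \<Longrightarrow> u n F a = a"
  using cols_D(2,4)[of F n l] by (auto simp: u_def)

lemma u_in_low: assumes F: "F \<in> cols n l" and a: "1 \<le> a" "a \<le> l" shows "u n F a \<in> F"
proof -
  note P = sl_props[OF cols_D(3)[OF F]]
  have "a - 1 < length (sorted_list_of_set F)" using a P(3) cols_D(2)[OF F] by simp
  then have "sorted_list_of_set F ! (a - 1) \<in> set (sorted_list_of_set F)" by (rule nth_mem)
  then have "u n F a \<in> set (sorted_list_of_set F)" unfolding u_low[OF F a] .
  then show ?thesis unfolding P(2) .
qed

lemma u_in_high: assumes F: "F \<in> cols n l" and a: "l < a" "a \<le> n" shows "u n F a \<in> {1..n} - F"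
proof -
  note P = sl_props[OF cols_D(5)[OF F]]
  have "a - l - 1 < length (sorted_list_of_set ({1..n} - F))" using a P(3) cols_D(6)[OF F] by simp
  then have "sorted_list_of_set ({1..n} - F) ! (a - l - 1) \<in> set (sorted_list_of_set ({1..n} - F))" by (rule nth_mem)
  then have "u n F a \<in> set (sorted_list_of_set ({1..n} - F))" unfolding u_high[OF F a] .
  then show ?thesis unfolding P(2) .
qed

lemma u_mono_low: assumes F: "F \<in> cols n l" and ab: "1 \<le> a" "a < b" "b \<le> l" shows "u n F a < u n F b"
proof -
  note P = sl_props[OF cols_D(3)[OF F]]
  have "b - 1 < length (sorted_list_of_set F)" using ab P(3) cols_D(2)[OF F] by simp
  then have "sorted_list_of_set F ! (a - 1) < sorted_list_of_set F ! (b - 1)"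
    using sorted_wrt_nth_less[OF P(1), of "a - 1" "b - 1"] ab by simp
  then show ?thesis using u_low[OF F] ab by simp
qed

lemma u_mono_high: assumes F: "F \<in> cols n l" and ab: "l < a" "a < b" "b \<le> n" shows "u n F a < u n F b"
proof -
  note P = sl_props[OF cols_D(5)[OF F]]
  have "b - l - 1 < length (sorted_list_of_set ({1..n} - F))" using ab P(3) cols_D(6)[OF F] by simp
  then have "sorted_list_of_set ({1..n} - F) ! (a - l - 1) < sorted_list_of_set ({1..n} - F) ! (b - l - 1)"
    using sorted_wrt_nth_less[OF P(1), of "a - l - 1" "b - l - 1"] ab by simp
  then show ?thesis using u_high[OF F] ab by simp
qed

lemma u_range: assumes F: "F \<in> cols n l" and a: "a \<in> {1..n}" shows "u n F a \<in> {1..n}"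
proof (cases "a \<le> l")
  case True
  then have "u n F a \<in> F" using u_in_low[OF F] a by simp
  then show ?thesis using cols_D(1)[OF F] by blast
next
  case False
  then show ?thesis using u_in_high[OF F, of a] a by simp
qed

lemma u_inj: assumes F: "F \<in> cols n l" shows "inj_on (u n F) {1..n}"
proof (rule inj_onI)
  fix a b assume a: "a \<in> {1..n}" and b: "b \<in> {1..n}" and e: "u n F a = u n F b"
  show "a = b"
  proof (rule ccontr)
    assume "a \<noteq> b"
    then consider "a < b" | "b < a" by linarith
    then show False
    proof cases
      case 1
      then show False using a b e u_mono_low[OF F, of a b] u_mono_high[OF F, of a b]
          u_in_low[OF F, of a] u_in_high[OF F, of b]
        by (cases "b \<le> l"; cases "a \<le> l") auto
    next
      case 2
      then show False using a b e u_mono_low[OF F, of b a] u_mono_high[OF F, of b a]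
          u_in_low[OF F, of b] u_in_high[OF F, of a]
        by (cases "b \<le> l"; cases "a \<le> l") auto
    qed
  qed
qed

lemma u_perm: assumes F: "F \<in> cols n l" shows "u n F permutes {1..n}"
proof (rule bij_imp_permutes)
  have sub: "u n F ` {1..n} \<subseteq> {1..n}" using u_range[OF F] by auto
  have "u n F ` {1..n} = {1..n}" using endo_inj_surj[OF _ sub u_inj[OF F]] by simp
  then show "bij_betw (u n F) {1..n} {1..n}" using u_inj[OF F] by (simp add: bij_betw_def)
  show "\<And>x. x \<notin> {1..n} \<Longrightarrow> u n F x = x" using u_out[OF F] by blast
qed

lemma u_img: assumes F: "F \<in> cols n l" shows "u n F ` {1..l} = F"
proof
  show "u n F ` {1..l} \<subseteq> F" using u_in_low[OF F] by auto
  show "F \<subseteq> u n F ` {1..l}"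
  proof
    fix x assume x: "x \<in> F"
    note P = sl_props[OF cols_D(3)[OF F]]
    obtain i where i: "i < length (sorted_list_of_set F)" "sorted_list_of_set F ! i = x"
      using x P(2) by (metis in_set_conv_nth)
    have "u n F (Suc i) = x" using u_low[OF F, of "Suc i"] i P(3) cols_D(2)[OF F] by simp
    moreover have "Suc i \<in> {1..l}" using i P(3) cols_D(2)[OF F] by simp
    ultimately show "x \<in> u n F ` {1..l}" by force
  qed
qed


lemma stab_perm: "w \<in> stab n l \<Longrightarrow> w permutes {1..n}"
  by (simp add: stab_def perms_iff)

lemma stab_block:
  assumes w: "w \<in> stab n l" and x: "x \<in> {1..n}" and ln: "l \<le> n"
  shows "w x \<le> l \<longleftrightarrow> x \<le> l"
proof
  have wp: "w permutes {1..n}" using stab_perm[OF w] .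
  have img: "w ` {1..l} = {1..l}" using w by (simp add: stab_def)
  assume "w x \<le> l"
  moreover have "1 \<le> w x" using perm_range[OF wp x] by simp
  ultimately have "w x \<in> w ` {1..l}" using img by simp
  then obtain y where y: "y \<in> {1..l}" "w y = w x" by auto
  then have "y = x" using perm_inj[OF wp] by blast
  then show "x \<le> l" using y by simp
next
  have img: "w ` {1..l} = {1..l}" using w by (simp add: stab_def)
  assume "x \<le> l"
  then have "x \<in> {1..l}" using x by simp
  then have "w x \<in> {1..l}" using img by blast
  then show "w x \<le> l" by simp
qed

lemma s_img_fix: "1 \<le> k \<Longrightarrow> k \<noteq> l \<Longrightarrow> s k ` {1..l} = {1..l}"
proof -
  assume k1: "1 \<le> k" and kl: "k \<noteq> l"
  have sub: "s k ` {1..l} \<subseteq> {1..l}" if "k \<noteq> l" "1 \<le> k" for k l :: nat using that by (auto simp: s_apply)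
  have "{1..l} = s k ` (s k ` {1..l})" by (simp add: image_comp)
  also have "\<dots> \<subseteq> s k ` {1..l}" using sub[OF kl k1] by blast
  finally show ?thesis using sub[OF kl k1] by blast
qed

lemma stab_comp_s:
  assumes w: "w \<in> stab n l" and k: "1 \<le> k" "k < n" "k \<noteq> l"
  shows "w \<circ> s k \<in> stab n l"
proof -
  have "(w \<circ> s k) ` {1..l} = w ` (s k ` {1..l})" by (simp add: image_comp)
  also have "\<dots> = {1..l}" using s_img_fix[OF k(1) k(3)] w by (simp add: stab_def)
  finally show ?thesis using w permutes_compose[OF s_permutes[OF k(1,2)] stab_perm[OF w]]
    by (simp add: stab_def perms_iff)
qed

lemma id_stab: "id \<in> stab n l"
  by (simp add: stab_def perms_iff permutes_id)

lemma Tu_stab: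
  fixes t :: "'a::comm_ring_1"
  assumes F: "F \<in> cols n l"
  shows "w \<in> stab n l \<Longrightarrow> Tw_mult n t (u n F) (Tb n w) = Tb n (u n F \<circ> w)"
proof (induction "len n w" arbitrary: w rule: less_induct)
  case less
  have wp: "w permutes {1..n}" using stab_perm[OF less(2)] .
  have up: "u n F permutes {1..n}" using u_perm[OF F] .
  have ln: "l \<le> n" using cols_D(4)[OF F] .
  show ?case
  proof (cases "w = id")
    case True then show ?thesis using Tw_Tb_id[OF up] by simp
  next
    case False
    obtain k where k: "1 \<le> k" "k < n" "w (Suc k) < w k" using right_desc[OF wp False] by blast
    have kl: "k \<noteq> l"
    proof
      assume "k = l"
      then have "w k \<le> l" "\<not> w (Suc k) \<le> l" using stab_block[OF less(2) _ ln, of k]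
          stab_block[OF less(2) _ ln, of "Suc k"] k by auto
      then show False using k(3) by simp
    qed
    define w' where "w' = w \<circ> s k"
    have w'S: "w' \<in> stab n l" unfolding w'_def by (rule stab_comp_s[OF less(2) k(1,2) kl])
    have w'p: "w' permutes {1..n}" using stab_perm[OF w'S] .
    have upk: "w' k < w' (Suc k)" using k by (simp add: w'_def s_apply)
    have lw: "len n w' < len n w" unfolding w'_def using lenR_iff[OF wp k(1,2)] k(3) by simp
    have ww: "w' \<circ> s k = w" by (simp add: w'_def fun_eq_iff)
    have IH: "Tw_mult n t (u n F) (Tb n w') = Tb n (u n F \<circ> w')" using less(1)[OF lw w'S] .
    have Tbw: "Tb n w = Rop n t k (Tb n w')" using Rop_basis_up[OF w'p k(1,2) upk, of t] ww by simp
    have rc: "rcomm n t (Tw_mult n t (u n F))" using Tw_lin_rcomm[OF up] by blast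
    have blk: "w' k \<le> l \<longleftrightarrow> w' (Suc k) \<le> l"
      using stab_block[OF w'S _ ln, of k] stab_block[OF w'S _ ln, of "Suc k"] k kl by auto
    have r1: "1 \<le> w' k" "w' (Suc k) \<le> n" using perm_range[OF w'p, of k] perm_range[OF w'p, of "Suc k"] k by auto
    have "(u n F \<circ> w') k < (u n F \<circ> w') (Suc k)"
      using u_mono_low[OF F r1(1) upk] u_mono_high[OF F _ upk r1(2)] blk by (cases "w' k \<le> l") auto
    then have "Rop n t k (Tb n (u n F \<circ> w')) = Tb n (u n F \<circ> w' \<circ> s k)"
      using Rop_basis_up[OF permutes_compose[OF w'p up] k(1,2)] by (simp add: o_assoc)
    moreover have "u n F \<circ> w' \<circ> s k = u n F \<circ> w" using ww by (simp add: comp_assoc)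
    ultimately show ?thesis using Tbw rc k IH unfolding rcomm_def by simp
  qed
qed

lemma Hsub_Hn: "g \<in> Hsub n l \<Longrightarrow> g \<in> Hn n"
  by (auto simp: Hsub_def Hn_def stab_def)

lemma hmult_u_Hsub:
  fixes t :: "'a::comm_ring_1"
  assumes F: "F \<in> cols n l" and g: "g \<in> Hsub n l"
  shows "hmult n t (Tb n (u n F)) g = (\<lambda>v. if inv (u n F) \<circ> v \<in> stab n l then g (inv (u n F) \<circ> v) else 0)"
proof
  fix v
  have up: "u n F permutes {1..n}" using u_perm[OF F] .
  have gH: "g \<in> Hn n" using Hsub_Hn[OF g] .
  have "hmult n t (Tb n (u n F)) g = Tw_mult n t (u n F) (\<Sum>w\<in>perms n. hsmult (g w) (Tb n w))"
    using hmult_Tb[OF up] Tb_expand[OF gH] by metis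
  also have "\<dots> = (\<Sum>w\<in>perms n. hsmult (g w) (Tw_mult n t (u n F) (Tb n w)))"
    using conjunct1[OF Tw_lin_rcomm[OF up, of t]] by (simp add: lin_sum lin_smult)
  finally have e: "hmult n t (Tb n (u n F)) g v = (\<Sum>w\<in>perms n. g w * Tw_mult n t (u n F) (Tb n w) v)"
    by (simp add: sum_fun_apply hsmult_apply)
  have "(\<Sum>w\<in>perms n. g w * Tw_mult n t (u n F) (Tb n w) v) =
        (\<Sum>w\<in>perms n. if w = inv (u n F) \<circ> v then (if w \<in> stab n l then g w else 0) else 0)"
  proof (rule sum.cong)
    fix w assume wP: "w \<in> perms n"
    show "g w * Tw_mult n t (u n F) (Tb n w) v = (if w = inv (u n F) \<circ> v then (if w \<in> stab n l then g w else 0) else 0)"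
    proof (cases "w \<in> stab n l")
      case False
      then show ?thesis using g by (auto simp: Hsub_def)
    next
      case True
      have uw: "u n F \<circ> w \<in> perms n" using permutes_compose[OF stab_perm[OF True] up] by (simp add: perms_iff)
      have eq: "v = u n F \<circ> w \<longleftrightarrow> w = inv (u n F) \<circ> v"
        using up by (metis comp_assoc o_id id_o permutes_inv_o)
      have "Tw_mult n t (u n F) (Tb n w) v = Tb n (u n F \<circ> w) v" using Tu_stab[OF F True, of t] by simp
      then show ?thesis using True uw eq by (auto simp: Tb_def)
    qed
  qed simp
  also have "\<dots> = (if inv (u n F) \<circ> v \<in> perms n then (if inv (u n F) \<circ> v \<in> stab n l then g (inv (u n F) \<circ> v) else 0) else 0)"
    by (rule sum.delta[OF finite_perms])
  also have "\<dots> = (if inv (u n F) \<circ> v \<in> stab n l then g (inv (u n F) \<circ> v) else 0)"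
    by (auto simp: stab_def)
  finally show "hmult n t (Tb n (u n F)) g v = (if inv (u n F) \<circ> v \<in> stab n l then g (inv (u n F) \<circ> v) else 0)"
    using e by simp
qed


definition Dc :: "nat \<Rightarrow> nat \<Rightarrow> 'a::comm_ring_1 hecke \<Rightarrow> nat set \<Rightarrow> 'a hecke" where
  "Dc n l h F = (if F \<in> cols n l then (\<lambda>w. if w \<in> stab n l then h (u n F \<circ> w) else 0) else 0)"

lemma fin_cols: "finite (cols n l)"
proof -
  have "cols n l \<subseteq> Pow {1..n}" by (auto simp: cols_def)
  then show ?thesis by (rule finite_subset) simp
qed

lemma stab_iff:
  assumes F: "F \<in> cols n l"
  shows "inv (u n F) \<circ> v \<in> stab n l \<longleftrightarrow> v \<in> perms n \<and> v ` {1..l} = F"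
proof
  have up: "u n F permutes {1..n}" using u_perm[OF F] .
  assume a: "inv (u n F) \<circ> v \<in> stab n l"
  have vv: "u n F \<circ> (inv (u n F) \<circ> v) = v" using up by (simp add: comp_assoc[symmetric] permutes_inv_o)
  have "v permutes {1..n}" using permutes_compose[OF stab_perm[OF a] up] vv by simp
  moreover have "v ` {1..l} = u n F ` ((inv (u n F) \<circ> v) ` {1..l})"
    using vv by (metis image_comp)
  then have "v ` {1..l} = F" using a u_img[OF F] by (simp add: stab_def)
  ultimately show "v \<in> perms n \<and> v ` {1..l} = F" by (simp add: perms_iff)
next
  have up: "u n F permutes {1..n}" using u_perm[OF F] .
  assume a: "v \<in> perms n \<and> v ` {1..l} = F"
  have "(inv (u n F) \<circ> v) ` {1..l} = inv (u n F) ` (v ` {1..l})" by (rule image_comp[symmetric])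
  also have "\<dots> = inv (u n F) ` (u n F ` {1..l})" using a u_img[OF F] by simp
  also have "\<dots> = {1..l}" using up by (simp add: image_comp permutes_inv_o)
  finally show "inv (u n F) \<circ> v \<in> stab n l"
    using a permutes_compose[OF _ permutes_inv[OF up], of v] by (simp add: stab_def perms_iff)
qed

lemma img_cols:
  assumes v: "v \<in> perms n" and ln: "l \<le> n"
  shows "v ` {1..l} \<in> cols n l"
proof -
  have vp: "v permutes {1..n}" using v by (simp add: perms_iff)
  have "inj_on v {1..l}" using permutes_inj[OF vp] by (simp add: inj_on_def inj_def)
  then have "card (v ` {1..l}) = l" by (simp add: card_image)
  moreover have "v ` {1..l} \<subseteq> {1..n}" using perm_range[OF vp] ln by auto
  ultimately show ?thesis by (simp add: cols_def)
qed

lemma sum_decomp: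
  fixes t :: "'a::comm_ring_1"
  assumes g: "\<And>F. g F \<in> Hsub n l" and ln: "l \<le> n"
  shows "(\<Sum>F\<in>cols n l. hmult n t (Tb n (u n F)) (g F)) =
     (\<lambda>v. if v \<in> perms n then g (v ` {1..l}) (inv (u n (v ` {1..l})) \<circ> v) else 0)"
proof
  fix v
  have "(\<Sum>F\<in>cols n l. hmult n t (Tb n (u n F)) (g F)) v =
     (\<Sum>F\<in>cols n l. if F = v ` {1..l} then (if v \<in> perms n then g F (inv (u n F) \<circ> v) else 0) else 0)"
    unfolding sum_fun_apply
  proof (rule sum.cong)
    fix F assume F: "F \<in> cols n l"
    show "hmult n t (Tb n (u n F)) (g F) v =
      (if F = v ` {1..l} then (if v \<in> perms n then g F (inv (u n F) \<circ> v) else 0) else 0)"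
      unfolding hmult_u_Hsub[OF F g] using stab_iff[OF F, of v] by auto
  qed simp
  also have "\<dots> = (if v ` {1..l} \<in> cols n l then (if v \<in> perms n then g (v ` {1..l}) (inv (u n (v ` {1..l})) \<circ> v) else 0) else 0)"
    by (rule sum.delta[OF fin_cols])
  also have "\<dots> = (if v \<in> perms n then g (v ` {1..l}) (inv (u n (v ` {1..l})) \<circ> v) else 0)"
    using img_cols[OF _ ln, of v] by auto
  finally show "(\<Sum>F\<in>cols n l. hmult n t (Tb n (u n F)) (g F)) v =
     (if v \<in> perms n then g (v ` {1..l}) (inv (u n (v ` {1..l})) \<circ> v) else 0)" .
qed

lemma Dc_Hsub: "Dc n l h F \<in> Hsub n l"
  by (simp add: Dc_def Hsub_def)

lemma decomp_eq:
  fixes t :: "'a::comm_ring_1"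
  assumes h: "h \<in> Hn n" and ln: "l \<le> n"
  shows "decomp n t l h = Dc n l h"
  unfolding decomp_def
proof (rule the_equality)
  show "(\<forall>F. Dc n l h F \<in> Hsub n l) \<and> (\<forall>F. F \<notin> cols n l \<longrightarrow> Dc n l h F = 0) \<and>
      h = (\<Sum>F\<in>cols n l. hmult n t (Tb n (u n F)) (Dc n l h F))"
  proof (intro conjI allI impI)
    show "\<And>F. Dc n l h F \<in> Hsub n l" by (rule Dc_Hsub)
    show "\<And>F. F \<notin> cols n l \<Longrightarrow> Dc n l h F = 0" by (simp add: Dc_def)
    show "h = (\<Sum>F\<in>cols n l. hmult n t (Tb n (u n F)) (Dc n l h F))"
      unfolding sum_decomp[OF Dc_Hsub ln]
    proof
      fix v
      show "h v = (if v \<in> perms n then Dc n l h (v ` {1..l}) (inv (u n (v ` {1..l})) \<circ> v) else 0)"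
      proof (cases "v \<in> perms n")
        case False then show ?thesis using h by (simp add: Hn_def)
      next
        case True
        let ?F = "v ` {1..l}"
        have F: "?F \<in> cols n l" using img_cols[OF True ln] .
        have st: "inv (u n ?F) \<circ> v \<in> stab n l" using stab_iff[OF F] True by simp
        have "u n ?F \<circ> (inv (u n ?F) \<circ> v) = v"
          using u_perm[OF F] by (simp add: comp_assoc[symmetric] permutes_inv_o)
        then show ?thesis using True F st by (simp add: Dc_def)
      qed
    qed
  qed
next
  fix hF
  assume P: "(\<forall>F. hF F \<in> Hsub n l) \<and> (\<forall>F. F \<notin> cols n l \<longrightarrow> hF F = 0) \<and>
      h = (\<Sum>F\<in>cols n l. hmult n t (Tb n (u n F)) (hF F))"
  then have hs: "h = (\<lambda>v. if v \<in> perms n then hF (v ` {1..l}) (inv (u n (v ` {1..l})) \<circ> v) else 0)"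
    using sum_decomp[of hF n l t] ln by auto
  show "hF = Dc n l h"
  proof (intro ext)
    fix F w
    show "hF F w = Dc n l h F w"
    proof (cases "F \<in> cols n l")
      case False then show ?thesis using P by (simp add: Dc_def)
    next
      case F: True
      show ?thesis
      proof (cases "w \<in> stab n l")
        case False then show ?thesis using P F by (simp add: Dc_def Hsub_def)
      next
        case True
        let ?v = "u n F \<circ> w"
        have up: "u n F permutes {1..n}" using u_perm[OF F] .
        have iv: "inv (u n F) \<circ> ?v = w" using up by (simp add: comp_assoc[symmetric] permutes_inv_o)
        then have "?v \<in> perms n \<and> ?v ` {1..l} = F" using stab_iff[OF F, of ?v] True by simp
        then have "h ?v = hF F w" using hs iv by simp
        then show ?thesis using F True by (simp add: Dc_def)
      qed
    qed
  qed
qed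


lemma s_mono:
  assumes "\<not> (j \<in> A \<and> Suc j \<in> A)" "x \<in> A" "y \<in> A" "x < y"
  shows "s j x < s j y"
  using assms by (auto simp: s_apply)

lemma sorted_map_mono:
  assumes fin: "finite A" and mono: "\<And>x y. x \<in> A \<Longrightarrow> y \<in> A \<Longrightarrow> x < y \<Longrightarrow> f x < (f y :: nat)"
  shows "sorted_list_of_set (f ` A) = map f (sorted_list_of_set (A :: nat set))"
proof -
  note P = sl_props[OF fin]
  have inj: "inj_on f A"
  proof (rule inj_onI)
    fix x y assume "x \<in> A" "y \<in> A" "f x = f y"
    then show "x = y" using mono[of x y] mono[of y x] by (metis less_irrefl linorder_neqE_nat)
  qed
  have "sorted_wrt (<) (map f (sorted_list_of_set A))"
    unfolding sorted_wrt_map using P(1) P(2) mono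
    by (smt (verit, ccfv_SIG) sorted_wrt_mono_rel)
  moreover have "set (map f (sorted_list_of_set A)) = f ` A" using P(2) by simp
  moreover have "length (map f (sorted_list_of_set A)) = card (f ` A)"
    using P(3) card_image[OF inj] by simp
  ultimately show ?thesis using sorted_list_of_set_unique[of "f ` A" "map f (sorted_list_of_set A)"] fin by simp
qed

lemma s_image_n: "1 \<le> j \<Longrightarrow> j < n \<Longrightarrow> s j ` {1..n} = {1..n}"
  using permutes_image[OF s_permutes] by blast

lemma scol_cols:
  assumes F: "F \<in> cols n l" and j: "1 \<le> j" "j < n"
  shows "scol j F \<in> cols n l"
proof -
  have "inj_on (s j) F" by (simp add: inj_on_def s_inj)
  then have "card (scol j F) = l" using cols_D(2)[OF F] by (simp add: scol_def card_image)
  moreover have "scol j F \<subseteq> {1..n}" using cols_D(1)[OF F] s_image_n[OF j] by (auto simp: scol_def)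
  ultimately show ?thesis by (simp add: cols_def)
qed

lemma u_scol:
  assumes F: "F \<in> cols n l" and j: "1 \<le> j" "j < n" and one: "j \<in> F \<longleftrightarrow> Suc j \<notin> F"
  shows "u n (scol j F) = s j \<circ> u n F"
proof
  fix k
  have G: "scol j F \<in> cols n l" using scol_cols[OF F j] .
  have m1: "\<And>x y. x \<in> F \<Longrightarrow> y \<in> F \<Longrightarrow> x < y \<Longrightarrow> s j x < s j y"
    using s_mono[of j F] one by blast
  have m2: "\<And>x y. x \<in> {1..n} - F \<Longrightarrow> y \<in> {1..n} - F \<Longrightarrow> x < y \<Longrightarrow> s j x < s j y"
    using s_mono[of j "{1..n} - F"] one by blast
  have L: "sorted_list_of_set (scol j F) = map (s j) (sorted_list_of_set F)"
    unfolding scol_def by (rule sorted_map_mono[OF cols_D(3)[OF F] m1])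
  have cmp: "{1..n} - scol j F = s j ` ({1..n} - F)"
    unfolding scol_def using s_image_n[OF j] by (simp add: image_set_diff inj_def s_inj)
  have M: "sorted_list_of_set ({1..n} - scol j F) = map (s j) (sorted_list_of_set ({1..n} - F))"
    unfolding cmp by (rule sorted_map_mono[OF _ m2]) simp
  show "u n (scol j F) k = (s j \<circ> u n F) k"
  proof (cases "1 \<le> k \<and> k \<le> l")
    case True
    have "k - 1 < length (sorted_list_of_set F)" using True sl_props(3)[OF cols_D(3)[OF F]] cols_D(2)[OF F] by auto
    then show ?thesis using True u_low[OF F] u_low[OF G] L by simp
  next
    case False
    show ?thesis
    proof (cases "l < k \<and> k \<le> n")
      case True
      have "k - l - 1 < length (sorted_list_of_set ({1..n} - F))"
        using True sl_props(3)[OF cols_D(5)[OF F]] cols_D(6)[OF F] by auto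
      then show ?thesis using True u_high[OF F] u_high[OF G] M by simp
    next
      case False2: False
      then have "k \<notin> {1..n}" using False by auto
      then show ?thesis using u_out[OF F] u_out[OF G] j by (auto simp: s_apply)
    qed
  qed
qed

lemma scol_fix:
  assumes both: "j \<in> F \<longleftrightarrow> Suc j \<in> F"
  shows "scol j F = F"
proof -
  have sub: "s j ` F \<subseteq> F" using both by (auto simp: s_apply)
  have "F = s j ` (s j ` F)" by (simp add: image_comp)
  also have "\<dots> \<subseteq> s j ` F" using sub by blast
  finally show ?thesis using sub by (simp add: scol_def)
qed

lemma inv_u_block:
  assumes F: "F \<in> cols n l" and x: "x \<in> {1..n}"
  shows "inv (u n F) x \<in> {1..n}" "inv (u n F) x \<le> l \<longleftrightarrow> x \<in> F"
proof -
  have up: "u n F permutes {1..n}" using u_perm[OF F] .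
  show r: "inv (u n F) x \<in> {1..n}" using inv_range[OF up x] .
  have ux: "u n F (inv (u n F) x) = x" using up by (simp add: permutes_inverses(1))
  show "inv (u n F) x \<le> l \<longleftrightarrow> x \<in> F"
  proof
    assume "inv (u n F) x \<le> l"
    then show "x \<in> F" using u_in_low[OF F, of "inv (u n F) x"] r ux by simp
  next
    assume "x \<in> F"
    then show "inv (u n F) x \<le> l" using u_in_high[OF F, of "inv (u n F) x"] r ux by (cases "inv (u n F) x \<le> l") auto
  qed
qed

lemma caseA_index:
  assumes F: "F \<in> cols n l" and j: "1 \<le> j" "j < n" and both: "j \<in> F \<longleftrightarrow> Suc j \<in> F"
  shows "\<exists>k. 1 \<le> k \<and> k < n \<and> k \<noteq> l \<and> u n F k = j \<and> u n F (Suc k) = Suc j"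
proof -
  have up: "u n F permutes {1..n}" using u_perm[OF F] .
  define k where "k = inv (u n F) j"
  define k' where "k' = inv (u n F) (Suc j)"
  have jr: "j \<in> {1..n}" "Suc j \<in> {1..n}" using j by auto
  have kr: "k \<in> {1..n}" "k' \<in> {1..n}" unfolding k_def k'_def using inv_u_block(1)[OF F] jr by auto
  have uk: "u n F k = j" "u n F k' = Suc j" unfolding k_def k'_def using up by (simp_all add: permutes_inverses(1))
  have blk: "k \<le> l \<longleftrightarrow> k' \<le> l" unfolding k_def k'_def using inv_u_block(2)[OF F] jr both by simp
  have mono: "\<And>a b. a \<in> {1..n} \<Longrightarrow> b \<in> {1..n} \<Longrightarrow> a < b \<Longrightarrow> (a \<le> l \<longleftrightarrow> b \<le> l) \<Longrightarrow> u n F a < u n F b"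
    using u_mono_low[OF F] u_mono_high[OF F] by (metis atLeastAtMost_iff not_le)
  have "k \<noteq> k'" using uk by auto
  moreover have "\<not> k' < k" using mono[OF kr(2) kr(1) _ ] blk uk by auto
  ultimately have kk: "k < k'" by simp
  have sk: "Suc k = k'"
  proof (rule ccontr)
    assume "Suc k \<noteq> k'"
    then have a: "Suc k < k'" using kk by simp
    have skr: "Suc k \<in> {1..n}" using a kr by auto
    have b1: "Suc k \<le> l \<longleftrightarrow> k \<le> l" using a blk by auto
    have "u n F k < u n F (Suc k)" using mono[OF kr(1) skr _ ] b1 by auto
    moreover have "u n F (Suc k) < u n F k'" using mono[OF skr kr(2) a] b1 blk by auto
    ultimately show False using uk by simp
  qed
  have "k \<noteq> l" using blk sk kr by auto
  then show ?thesis using kr sk uk by (intro exI[of _ k]) auto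
qed

lemma col_le_bad:
  assumes F: "F \<in> cols n l" and j: "1 \<le> j" "j < n" and jin: "j \<in> F" and sj: "Suc j \<notin> F"
  shows "\<not> col_le (scol j F) F"
proof
  assume cl: "col_le (scol j F) F"
  have m1: "\<And>x y. x \<in> F \<Longrightarrow> y \<in> F \<Longrightarrow> x < y \<Longrightarrow> s j x < s j y"
    using s_mono[of j F] sj by blast
  have L: "sorted_list_of_set (scol j F) = map (s j) (sorted_list_of_set F)"
    unfolding scol_def by (rule sorted_map_mono[OF cols_D(3)[OF F] m1])
  note P = sl_props[OF cols_D(3)[OF F]]
  obtain p where p: "p < length (sorted_list_of_set F)" "sorted_list_of_set F ! p = j"
    using jin P(2) by (metis in_set_conv_nth)
  have "p < card (scol j F)" using p P(3) scol_cols[OF F j] cols_D(2)[OF F] by (simp add: cols_def)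
  then have "sorted_list_of_set (scol j F) ! p \<le> sorted_list_of_set F ! p" using cl by (simp add: col_le_def)
  then show False using L p by (simp add: s_apply)
qed


lemma TX_Ts:
  assumes x: "x permutes {1..n}" and j: "1 \<le> j" "j < n" and up: "x j < x (Suc j)"
  shows "hmult n t (Tb n x) (Tb n (s j)) = Tb n (x \<circ> s j)"
proof -
  have sj: "Tb n (s j) = Rop n t j (Tb n id)"
    using Rop_basis_up[OF permutes_id j, of t] by simp
  have rc: "rcomm n t (Tw_mult n t x)" using Tw_lin_rcomm[OF x] by blast
  have "hmult n t (Tb n x) (Tb n (s j)) = Rop n t j (Tw_mult n t x (Tb n id))"
    unfolding hmult_Tb[OF x] sj using rc j by (simp add: rcomm_def)
  also have "\<dots> = Tb n (x \<circ> s j)" using Tw_Tb_id[OF x, where t=t] Rop_basis_up[OF x j up, where t=t] by simp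
  finally show ?thesis .
qed

lemma Ts_TX:
  assumes x: "x permutes {1..n}" and k: "1 \<le> k" "k < n" and up: "inv x k < inv x (Suc k)"
  shows "hmult n t (Tb n (s k)) (Tb n x) = Tb n (s k \<circ> x)"
  using hmult_Ts[OF k, where t=t] Ti_basis_up[OF x k up, where t=t] by simp

lemma inv_s: "inv (s j) = s j"
  using s_comp_s by (metis inv_unique_comp)

lemma caseB:
  fixes t :: "'a::comm_ring_1"
  assumes F: "F \<in> cols n l" and j: "1 \<le> j" "j < n" and jF: "j \<notin> F" and sjF: "Suc j \<in> F"
    and tu: "t dvd 1" and g: "g \<in> Hn n"
  shows "hsmult (t ^ len n (u n F)) (hmult n t (hinv n t (Tb n (inv (u n F)))) g) =
    hsmult t (hmult n t (hinv n t (Tb n (s j)))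
      (hsmult (t ^ len n (u n (scol j F))) (hmult n t (hinv n t (Tb n (inv (u n (scol j F))))) g)))"
proof -
  let ?G = "scol j F"
  have G: "?G \<in> cols n l" using scol_cols[OF F j] .
  have uG: "u n ?G = s j \<circ> u n F" using u_scol[OF F j] jF sjF by blast
  have uF: "u n F = s j \<circ> u n ?G" unfolding uG by (simp add: fun_eq_iff)
  have upG: "u n ?G permutes {1..n}" using u_perm[OF G] .
  have jG: "j \<in> ?G" using sjF by (force simp: scol_def s_apply)
  have sjG: "Suc j \<notin> ?G"
  proof
    assume "Suc j \<in> ?G"
    then obtain y where "y \<in> F" "s j y = Suc j" by (auto simp: scol_def)
    then have "y = j" by (metis s_apply Suc_n_not_n)
    then show False using jF \<open>y \<in> F\<close> by simp
  qed
  have jr: "j \<in> {1..n}" "Suc j \<in> {1..n}" using j by auto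
  have lt: "inv (u n ?G) j < inv (u n ?G) (Suc j)"
    using inv_u_block(2)[OF G jr(1)] inv_u_block(2)[OF G jr(2)] jG sjG by simp
  have lenF: "len n (u n F) = Suc (len n (u n ?G))" unfolding uF using lenL_up[OF upG j lt] .
  have invF: "inv (u n F) = inv (u n ?G) \<circ> s j"
  proof -
    have "bij (s j)" "bij (u n ?G)" using s_permutes[OF j] upG by (simp_all add: permutes_bij)
    then show ?thesis unfolding uF by (simp add: o_inv_distrib inv_s)
  qed
  let ?X = "inv (u n ?G)"
  have Xp: "?X permutes {1..n}" using permutes_inv[OF upG] .
  have TF: "Tb n (inv (u n F)) = hmult n t (Tb n ?X) (Tb n (s j))"
    unfolding invF using TX_Ts[OF Xp j lt, where t=t] by simp
  have hF: "hinv n t (Tb n (inv (u n F))) = hmult n t (hinv n t (Tb n (s j))) (hinv n t (Tb n ?X))"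
    unfolding TF by (rule hinv_eq[OF isinv_mult[OF isinv_hinv[OF Xp tu] isinv_hinv[OF s_permutes[OF j] tu]]])
  have H1: "hinv n t (Tb n (s j)) \<in> Hn n" "hinv n t (Tb n ?X) \<in> Hn n"
    using isinv_hinv[OF s_permutes[OF j] tu] isinv_hinv[OF Xp tu] by (auto simp: isinv_def)
  show ?thesis unfolding hF lenF using H1 g
    by (simp add: hmult_assoc hmult_smult2 hsmult_hsmult)
qed

lemma one_lam_Hn: "one_lam n l \<in> Hn n"
  by (auto simp: one_lam_def Hn_def stab_def)

lemma stab_s_comp:
  assumes k: "1 \<le> k" "k < n" "k \<noteq> l" and v: "v \<in> perms n"
  shows "s k \<circ> v \<in> stab n l \<longleftrightarrow> v \<in> stab n l"
proof -
  have fix1: "s k ` {1..l} = {1..l}" using s_img_fix[OF k(1) k(3)] .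
  have vp: "v permutes {1..n}" using v by (simp add: perms_iff)
  have sv: "s k \<circ> v \<in> perms n" using permutes_compose[OF vp s_permutes[OF k(1,2)]] by (simp add: perms_iff)
  have "(s k \<circ> v) ` {1..l} = s k ` (v ` {1..l})" by (rule image_comp[symmetric])
  moreover have "v ` {1..l} = s k ` ((s k \<circ> v) ` {1..l})" by (simp add: image_comp)
  ultimately have "(s k \<circ> v) ` {1..l} = {1..l} \<longleftrightarrow> v ` {1..l} = {1..l}" using fix1 by metis
  then show ?thesis using v sv by (simp add: stab_def)
qed

lemma Ti_one_lam:
  assumes k: "1 \<le> k" "k < n" "k \<noteq> l"
  shows "Ti_mult n t k (one_lam n l) = hsmult t (one_lam n l)"
proof
  fix v
  show "Ti_mult n t k (one_lam n l) v = hsmult t (one_lam n l) v"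
  proof (cases "v \<in> perms n")
    case True
    then show ?thesis using stab_s_comp[OF k True]
      by (auto simp: Ti_mult_def one_lam_def hsmult_def algebra_simps)
  next
    case False
    then show ?thesis by (auto simp: Ti_mult_def one_lam_def hsmult_def stab_def)
  qed
qed

lemma caseA:
  fixes t :: "'a::comm_ring_1"
  assumes F: "F \<in> cols n l" and j: "1 \<le> j" "j < n" and both: "j \<in> F \<longleftrightarrow> Suc j \<in> F"
    and tu: "t dvd 1"
  shows "Psi_col n t F = hsmult t (hmult n t (hinv n t (Tb n (s j))) (Psi_col n t F))"
proof -
  obtain k where k: "1 \<le> k" "k < n" "k \<noteq> l" "u n F k = j" "u n F (Suc k) = Suc j"
    using caseA_index[OF F j both] by blast
  have up: "u n F permutes {1..n}" using u_perm[OF F] .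
  have sw: "s j \<circ> u n F = u n F \<circ> s k" using swap_commute[OF up] k(4,5) by blast
  let ?X = "inv (u n F)"
  have Xp: "?X permutes {1..n}" using permutes_inv[OF up] .
  have uX: "u n F \<circ> ?X = id" "?X \<circ> u n F = id" using up by (simp_all add: permutes_inv_o)
  have Xsw: "?X \<circ> s j = s k \<circ> ?X"
  proof -
    have "?X \<circ> s j = ?X \<circ> (s j \<circ> u n F) \<circ> ?X" using uX by (simp add: comp_assoc)
    also have "\<dots> = (?X \<circ> u n F) \<circ> s k \<circ> ?X" unfolding sw by (simp add: comp_assoc)
    finally show ?thesis using uX by simp
  qed
  have Xj: "?X j = k" "?X (Suc j) = Suc k" using up k by (simp_all add: permutes_inv_eq)
  have iX: "inv ?X = u n F" using up by (simp add: inv_inv_eq permutes_bij)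
  have e1: "hmult n t (Tb n ?X) (Tb n (s j)) = Tb n (?X \<circ> s j)"
    by (rule TX_Ts[OF Xp j]) (simp add: Xj)
  have e2: "hmult n t (Tb n (s k)) (Tb n ?X) = Tb n (s k \<circ> ?X)"
    by (rule Ts_TX[OF Xp k(1,2)]) (simp add: iX k(4,5))
  have comm: "hmult n t (Tb n ?X) (Tb n (s j)) = hmult n t (Tb n (s k)) (Tb n ?X)"
    using e1 e2 Xsw by simp
  define Y where "Y = hinv n t (Tb n ?X)"
  have iY: "isinv n t (Tb n ?X) Y" unfolding Y_def by (rule isinv_hinv[OF Xp tu])
  then have YH: "Y \<in> Hn n" and YX: "hmult n t Y (Tb n ?X) = Tb n id" and XY: "hmult n t (Tb n ?X) Y = Tb n id"
    by (auto simp: isinv_def)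
  have TjY: "hmult n t (Tb n (s j)) Y = hmult n t Y (Tb n (s k))"
  proof -
    have "hmult n t (Tb n (s j)) Y = hmult n t (hmult n t Y (Tb n ?X)) (hmult n t (Tb n (s j)) Y)"
      using YX by (simp add: hmult_id_left)
    also have "\<dots> = hmult n t Y (hmult n t (hmult n t (Tb n ?X) (Tb n (s j))) Y)"
      using YH by (simp add: hmult_assoc Tb_in_Hn hmult_in_Hn)
    also have "\<dots> = hmult n t Y (hmult n t (hmult n t (Tb n (s k)) (Tb n ?X)) Y)" using comm by simp
    also have "\<dots> = hmult n t Y (hmult n t (Tb n (s k)) (Tb n id))"
      using YH XY by (simp add: hmult_assoc Tb_in_Hn)
    also have "\<dots> = hmult n t Y (Tb n (s k))" using hmult_Tb_id[OF Tb_in_Hn, where t=t] by simp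
    finally show ?thesis .
  qed
  have cl: "card F = l" using cols_D(2)[OF F] .
  define P where "P = Psi_col n t F"
  have Pdef: "P = hsmult (t ^ len n (u n F)) (hmult n t Y (one_lam n l))"
    unfolding P_def Psi_col_def Y_def cl ..
  have PH: "P \<in> Hn n" unfolding Pdef by (intro Hn_smult hmult_in_Hn one_lam_Hn)
  have TjP: "hmult n t (Tb n (s j)) P = hsmult t P"
  proof -
    have "hmult n t (Tb n (s j)) P = hsmult (t ^ len n (u n F)) (hmult n t (hmult n t (Tb n (s j)) Y) (one_lam n l))"
      unfolding Pdef using hmult_assoc[OF YH one_lam_Hn[of n l], where t=t and a="Tb n (s j)"] by (simp add: hmult_smult2)
    also have "\<dots> = hsmult (t ^ len n (u n F)) (hmult n t Y (hmult n t (Tb n (s k)) (one_lam n l)))"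
      unfolding TjY using hmult_assoc[OF Tb_in_Hn[of n "s k"] one_lam_Hn[of n l], where t=t and a=Y] by simp
    also have "\<dots> = hsmult (t ^ len n (u n F)) (hmult n t Y (hsmult t (one_lam n l)))"
      using hmult_Ts[OF k(1,2), where t=t] Ti_one_lam[OF k(1,2,3), where t=t] by simp
    also have "\<dots> = hsmult t P" unfolding Pdef by (simp add: hmult_smult2 hsmult_hsmult mult.commute)
    finally show ?thesis .
  qed
  define Yj where "Yj = hinv n t (Tb n (s j))"
  have iYj: "isinv n t (Tb n (s j)) Yj" unfolding Yj_def by (rule isinv_hinv[OF s_permutes[OF j] tu])
  then have YjH: "Yj \<in> Hn n" and YjT: "hmult n t Yj (Tb n (s j)) = Tb n id" by (auto simp: isinv_def)
  have "P = hmult n t (hmult n t Yj (Tb n (s j))) P" using YjT by (simp add: hmult_id_left)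
  also have "\<dots> = hmult n t Yj (hsmult t P)" using PH TjP by (simp add: hmult_assoc Tb_in_Hn)
  also have "\<dots> = hsmult t (hmult n t Yj P)" by (simp add: hmult_smult2)
  finally show ?thesis unfolding P_def Yj_def .
qed


lemma sorted_upto_nth: "Suc 0 \<le> k \<Longrightarrow> k \<le> m \<Longrightarrow> sorted_list_of_set {Suc 0..m} ! (k - Suc 0) = (k::nat)"
proof -
  assume k: "Suc 0 \<le> k" "k \<le> m"
  have "{Suc 0..m} = {Suc 0..<Suc m}" by auto
  then have "sorted_list_of_set {Suc 0..m} = [Suc 0..<Suc m]" by (simp only: sorted_list_of_set_range)
  then show ?thesis using k by (simp del: upt_Suc add: nth_upt)
qed

lemma u_initial:
  assumes m: "m \<le> n"
  shows "u n {1..m} = id"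
proof
  fix k
  have c: "card {1..m} = m" by simp
  have d: "{1..n} - {1..m} = {Suc m..<Suc n}" by auto
  show "u n {1..m} k = id k"
  proof (cases "1 \<le> k \<and> k \<le> m")
    case True then show ?thesis by (simp add: u_def sorted_upto_nth)
  next
    case False
    show ?thesis
    proof (cases "m < k \<and> k \<le> n")
      case True
      have "sorted_list_of_set ({1..n} - {1..m}) ! (k - m - 1) = k"
        unfolding d sorted_list_of_set_range using True by (simp del: upt_Suc add: nth_upt)
      then show ?thesis using True by (simp add: u_def)
    next
      case False2: False
      then show ?thesis using False by (auto simp: u_def)
    qed
  qed
qed

lemma initial_cols: "m \<le> n \<Longrightarrow> {1..m} \<in> cols n m"
  by (auto simp: cols_def)

lemma one_lam_inv:
  assumes j: "m < j" "j < n"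
  shows "one_lam n m (s j \<circ> v) = (one_lam n m v :: 'a::comm_ring_1)"
proof (cases "v \<in> perms n")
  case True
  then show ?thesis using stab_s_comp[of j n m v] j by (simp add: one_lam_def)
next
  case False
  have "s j \<circ> v \<notin> perms n"
  proof
    assume "s j \<circ> v \<in> perms n"
    then have "s j \<circ> (s j \<circ> v) \<in> perms n"
      using permutes_compose[OF _ s_permutes[of j n]] j by (simp add: perms_iff)
    then show False using False by (simp add: comp_assoc[symmetric] s_comp_s)
  qed
  then show ?thesis using False by (simp add: one_lam_def stab_def)
qed

lemma stab_inv:
  assumes j: "m < j" "j < n"
  shows "s j \<circ> v \<in> stab n m \<longleftrightarrow> v \<in> stab n m"
proof (cases "v \<in> perms n")
  case True
  then show ?thesis using stab_s_comp[of j n m v] j by simp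
next
  case False
  have "s j \<circ> v \<notin> perms n"
  proof
    assume "s j \<circ> v \<in> perms n"
    then have "s j \<circ> (s j \<circ> v) \<in> perms n"
      using permutes_compose[OF _ s_permutes[of j n]] j by (simp add: perms_iff)
    then show False using False by (simp add: comp_assoc[symmetric] s_comp_s)
  qed
  then show ?thesis using False by (simp add: stab_def)
qed

lemma Psi_col_initial:
  fixes t :: "'a::comm_ring_1"
  assumes m: "m \<le> n"
  shows "Psi_col n t {1..m} = one_lam n m"
  unfolding Psi_col_def u_initial[OF m] by (simp add: len_id hinv_id hmult_id_left)

lemma Psi_initial_list:
  fixes t :: "'a::comm_ring_1"
  shows "Cs \<noteq> [] \<Longrightarrow> (\<forall>C\<in>set Cs. \<exists>m\<le>n. C = {1..m}) \<Longrightarrow>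
    (\<forall>k. Suc k < length Cs \<longrightarrow> card (Cs ! Suc k) \<le> card (Cs ! k)) \<Longrightarrow>
    Psi n t Cs \<in> Hn n \<and> (\<forall>j v. card (hd Cs) < j \<longrightarrow> j < n \<longrightarrow> Psi n t Cs (s j \<circ> v) = Psi n t Cs v)"
proof (induction Cs)
  case Nil then show ?case by simp
next
  case (Cons C rest)
  obtain m where m: "m \<le> n" "C = {1..m}" using Cons.prems(2) by auto
  have cm: "card C = m" using m by simp
  show ?case
  proof (cases rest)
    case Nil
    have P: "Psi n t (C # rest) = one_lam n m" using Nil m Psi_col_initial[OF m(1)] by simp
    show ?thesis unfolding P
    proof (intro conjI allI impI)
      show "one_lam n m \<in> Hn n" by (rule one_lam_Hn)
    next
      fix j v assume "card (hd (C # rest)) < j" "j < n"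
      then have jj: "m < j" "j < n" using cm by auto
      show "one_lam n m (s j \<circ> v) = (one_lam n m v :: 'a)" by (rule one_lam_inv[OF jj])
    qed
  next
    case (Cons D S)
    have IH: "Psi n t rest \<in> Hn n \<and> (\<forall>j v. card (hd rest) < j \<longrightarrow> j < n \<longrightarrow> Psi n t rest (s j \<circ> v) = Psi n t rest v)"
    proof (rule Cons.IH)
      show "rest \<noteq> []" using Cons by simp
      show "\<forall>C\<in>set rest. \<exists>m\<le>n. C = {1..m}" using Cons.prems(2) by simp
      show "\<forall>k. Suc k < length rest \<longrightarrow> card (rest ! Suc k) \<le> card (rest ! k)"
        using Cons.prems(3) by (metis length_Cons nth_Cons_Suc Suc_less_eq)
    qed
    have DC: "card D \<le> m" using Cons.prems(3)[rule_format, of 0] Cons cm by simp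
    let ?Q = "Psi n t rest"
    have P: "Psi n t (C # rest) = Dc n m ?Q C"
      using Cons m u_initial[OF m(1)] decomp_eq[OF conjunct1[OF IH] m(1), of t]
      by (simp add: len_id hinv_id hmult_id_left)
    have Dv: "Dc n m ?Q C = (\<lambda>w. if w \<in> stab n m then ?Q w else 0)"
      using initial_cols[OF m(1)] unfolding Dc_def m(2) u_initial[OF m(1)] by (simp add: id_comp cong: if_cong)
    show ?thesis
    proof (intro conjI allI impI)
      show "Psi n t (C # rest) \<in> Hn n" unfolding P by (rule Hsub_Hn[OF Dc_Hsub])
    next
      fix j v assume j: "card (hd (C # rest)) < j" "j < n"
      then have jm: "m < j" using cm by simp
      have "?Q (s j \<circ> v) = ?Q v" using IH j jm DC Cons by auto
      then show "Psi n t (C # rest) (s j \<circ> v) = Psi n t (C # rest) v"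
        unfolding P Dv using stab_inv[OF jm j(2)] by simp
    qed
  qed
qed


lemma downclosed:
  fixes A :: "nat set" and n :: nat
  assumes sub: "A \<subseteq> {1..n}" and dc: "\<And>i i'. i \<in> A \<Longrightarrow> 1 \<le> i' \<Longrightarrow> i' \<le> i \<Longrightarrow> i' \<in> A"
  shows "\<exists>m\<le>n. A = {1..m}"
proof (cases "A = {}")
  case True then show ?thesis by (intro exI[of _ 0]) auto
next
  case False
  have fin: "finite A" using sub finite_subset by blast
  let ?M = "Max A"
  have MA: "?M \<in> A" using Max_in[OF fin False] .
  have "A = {1..?M}"
  proof
    show "A \<subseteq> {1..?M}" using sub Max_ge[OF fin] by auto
    show "{1..?M} \<subseteq> A" using dc[OF MA] by auto
  qed
  moreover have "?M \<le> n" using MA sub by auto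
  ultimately show ?thesis by blast
qed

lemma T0_cols:
  assumes part: "is_partition n lam"
  shows "\<forall>C\<in>set (T0 n lam). \<exists>m\<le>n. C = {1..m}"
proof
  fix C assume "C \<in> set (T0 n lam)"
  then obtain k where k: "1 \<le> k" and C: "C = {i \<in> {1..n}. k \<le> lam ! (i - 1)}"
    by (auto simp: T0_def)
  have len: "length lam = n" and sr: "sorted (rev lam)" using part by (auto simp: is_partition_def)
  show "\<exists>m\<le>n. C = {1..m}"
  proof (rule downclosed)
    show "C \<subseteq> {1..n}" using C by auto
    fix i i' assume i: "i \<in> C" "1 \<le> i'" "i' \<le> i"
    have "lam ! (i - 1) \<le> lam ! (i' - 1)"
      using sorted_rev_nth_mono[OF sr, of "i' - 1" "i - 1"] i C len by auto
    then show "i' \<in> C" using i C by auto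
  qed
qed

lemma strict_pos:
  assumes s: "sorted_wrt (<) xs" and pos: "\<forall>x\<in>set xs. 1 \<le> x"
  shows "i < length xs \<Longrightarrow> Suc i \<le> (xs ! i :: nat)"
proof (induction i)
  case 0 then show ?case using pos by (simp add: Suc_le_eq)
next
  case (Suc i)
  then have "xs ! i < xs ! Suc i" using sorted_wrt_nth_less[OF s, of i "Suc i"] by simp
  then show ?case using Suc by simp
qed

theorem proposition6p3:
  fixes n :: nat and t :: "'a::comm_ring_1"
  assumes "n \<ge> 1" and "t dvd 1"
  shows
    "(\<forall>lam l E j. is_partition n lam \<and> l \<in> {1..n} \<and> l \<ge> nparts lam \<and> E \<in> cols n l
        \<and> semistandard (E # T0 n lam) \<and> 1 \<le> j \<and> j < n \<and> j \<notin> E \<and> Suc j \<in> E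
        \<longrightarrow> Psi n t (E # T0 n lam)
            = hsmult t (hmult n t (hinv n t (Tb n (s j))) (Psi n t (scol j E # T0 n lam))))
   \<and> (\<forall>l E j. l \<in> {1..n} \<and> E \<in> cols n l \<and> 1 \<le> j \<and> j < n \<and> col_le (scol j E) E
        \<longrightarrow> Psi_col n t E = hsmult t (hmult n t (hinv n t (Tb n (s j))) (Psi_col n t (scol j E))))"
proof (intro conjI allI impI)
  note tu = assms(2)
  have colB: "Psi_col n t E = hsmult t (hmult n t (hinv n t (Tb n (s j))) (Psi_col n t (scol j E)))"
    if E: "E \<in> cols n l" and j: "1 \<le> j" "j < n" and jE: "j \<notin> E" and sjE: "Suc j \<in> E" for l E j
  proof -
    have cE: "card E = l" using cols_D(2)[OF E] .
    have cG: "card (scol j E) = l" using cols_D(2)[OF scol_cols[OF E j]] .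
    show ?thesis unfolding Psi_col_def cE cG
      by (rule caseB[OF E j jE sjE tu one_lam_Hn])
  qed
  {
    fix lam l E j
    assume h: "is_partition n lam \<and> l \<in> {1..n} \<and> l \<ge> nparts lam \<and> E \<in> cols n l
        \<and> semistandard (E # T0 n lam) \<and> 1 \<le> j \<and> j < n \<and> j \<notin> E \<and> Suc j \<in> E"
    then have part: "is_partition n lam" and E: "E \<in> cols n l" and ss: "semistandard (E # T0 n lam)"
      and j: "1 \<le> j" "j < n" and jE: "j \<notin> E" and sjE: "Suc j \<in> E" by auto
    show "Psi n t (E # T0 n lam) = hsmult t (hmult n t (hinv n t (Tb n (s j))) (Psi n t (scol j E # T0 n lam)))"
    proof (cases "T0 n lam")
      case Nil
      then show ?thesis using colB[OF E j jE sjE] by simp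
    next
      case (Cons D S)
      let ?Ts = "T0 n lam"
      have cl: "\<forall>C\<in>set ?Ts. \<exists>m\<le>n. C = {1..m}" using T0_cols[OF part] .
      have ord: "\<forall>k. Suc k < length ?Ts \<longrightarrow> card (?Ts ! Suc k) \<le> card (?Ts ! k)"
      proof (intro allI impI)
        fix k assume "Suc k < length ?Ts"
        then have "Suc (Suc k) < length (E # ?Ts)" by simp
        then have "card ((E # ?Ts) ! Suc (Suc k)) \<le> card ((E # ?Ts) ! Suc k)"
          using ss unfolding semistandard_def by blast
        then show "card (?Ts ! Suc k) \<le> card (?Ts ! k)" by simp
      qed
      have PI: "Psi n t ?Ts \<in> Hn n \<and> (\<forall>j v. card (hd ?Ts) < j \<longrightarrow> j < n \<longrightarrow> Psi n t ?Ts (s j \<circ> v) = Psi n t ?Ts v)"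
        by (rule Psi_initial_list) (use Cons cl ord in auto)
      obtain m where m: "m \<le> n" "D = {1..m}" using cl Cons by auto
      have "Suc 0 < length (E # ?Ts)" using Cons by simp
      then have "card ((E # ?Ts) ! Suc 0) \<le> card ((E # ?Ts) ! 0) \<and>
        (\<forall>r < card ((E # ?Ts) ! Suc 0). sorted_list_of_set ((E # ?Ts) ! 0) ! r \<le> sorted_list_of_set ((E # ?Ts) ! Suc 0) ! r)"
        using ss unfolding semistandard_def by blast
      then have ss0: "card D \<le> card E" "\<forall>r < card D. sorted_list_of_set E ! r \<le> sorted_list_of_set D ! r"
        using Cons by simp_all
      have jm: "m < j"
      proof (rule ccontr)
        assume "\<not> m < j"
        then have jm': "j \<le> m" by simp
        have cD: "card D = m" using m by simp
        have r: "j - 1 < card D" using jm' j cD by simp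
        have "sorted_list_of_set D ! (j - 1) = j" using sorted_upto_nth[of j m] jm' j m by simp
        then have le: "sorted_list_of_set E ! (j - 1) \<le> j" using ss0(2) r by metis
        note P = sl_props[OF cols_D(3)[OF E]]
        have lenE: "j - 1 < length (sorted_list_of_set E)" using r ss0(1) P(3) by simp
        have pos: "\<forall>x\<in>set (sorted_list_of_set E). 1 \<le> x" using P(2) cols_D(1)[OF E] by auto
        have "Suc (j - 1) \<le> sorted_list_of_set E ! (j - 1)" using strict_pos[OF P(1) pos lenE] .
        then have "sorted_list_of_set E ! (j - 1) = j" using le j by simp
        moreover have "sorted_list_of_set E ! (j - 1) \<in> E" using nth_mem[OF lenE] P(2) by simp
        ultimately show False using jE by simp
      qed
      let ?Q = "Psi n t ?Ts"
      have QH: "?Q \<in> Hn n" using PI by blast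
      have inv: "?Q (s j \<circ> v) = ?Q v" for v using PI jm m j Cons by auto
      have ln: "l \<le> n" using cols_D(4)[OF E] .
      have G: "scol j E \<in> cols n l" using scol_cols[OF E j] .
      have cE: "card E = l" using cols_D(2)[OF E] .
      have cG: "card (scol j E) = l" using cols_D(2)[OF G] .
      have uG: "u n (scol j E) = s j \<circ> u n E" using u_scol[OF E j] jE sjE by blast
      have DD: "decomp n t l ?Q E = decomp n t l ?Q (scol j E)"
        unfolding decomp_eq[OF QH ln] Dc_def using E G uG inv by (simp add: comp_assoc cong: if_cong)
      have eqE: "Psi n t (E # ?Ts) = hsmult (t ^ len n (u n E)) (hmult n t (hinv n t (Tb n (inv (u n E)))) (decomp n t l ?Q E))"
        using Cons cE by simp
      have eqG: "Psi n t (scol j E # ?Ts) = hsmult (t ^ len n (u n (scol j E))) (hmult n t (hinv n t (Tb n (inv (u n (scol j E))))) (decomp n t l ?Q (scol j E)))"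
        using Cons cG by simp
      have gH: "decomp n t l ?Q (scol j E) \<in> Hn n" unfolding decomp_eq[OF QH ln] by (rule Hsub_Hn[OF Dc_Hsub])
      show ?thesis unfolding eqE eqG DD by (rule caseB[OF E j jE sjE tu gH])
    qed
  }
  {
    fix l E j
    assume h: "l \<in> {1..n} \<and> E \<in> cols n l \<and> 1 \<le> j \<and> j < n \<and> col_le (scol j E) E"
    then have E: "E \<in> cols n l" and j: "1 \<le> j" "j < n" and cle: "col_le (scol j E) E" by auto
    show "Psi_col n t E = hsmult t (hmult n t (hinv n t (Tb n (s j))) (Psi_col n t (scol j E)))"
    proof (cases "j \<in> E \<longleftrightarrow> Suc j \<in> E")
      case True
      then show ?thesis using caseA[OF E j True tu] scol_fix[OF True] by simp
    next
      case False
      show ?thesis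
      proof (cases "j \<in> E")
        case True
        then have "Suc j \<notin> E" using False by simp
        then show ?thesis using col_le_bad[OF E j True] cle by simp
      next
        case jE: False
        then have "Suc j \<in> E" using False by simp
        then show ?thesis using colB[OF E j jE] by simp
      qed
    qed
  }
qed


end
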